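(* Let $R$ be a finite chain ring with maximal ideal $\langle\gamma\rangle$, even index of nilpotency $e$, and residue field $K$ with $|K|=p^r$, so $|R|=p^{er}$. Let $n$ be an odd positive integer which is a power of a prime, with $\gcd(n,p)=1$. Then there exists a non-trivial cyclic self-dual code of length $n$ over $R$ if and only if $\mathrm{ord}_n(p^r)$ is odd.
   Context: $\mathrm{ord}_n(q)$ denotes the multiplicative order of $q$ modulo $n$ (smallest $l\ge1$ with $q^l\equiv1\pmod n$). A finite chain ring is a finite commutative local ring whose ideals are linearly ordered; its maximal ideal is generated by a nilpotent $\gamma$ of nilpotency index $e$, with residue field $K=R/\langle\gamma\rangle$. A code of length $n$ over $R$ is an $R$-submodule of $R^n$; cyclic means closed under cyclic shift; $C^\perp$ is the dual under $[u,v]=\sum u_iv_i$; self-dual means $C=C^\perp$. For even $e$, the trivial self-dual code is $\gamma^{e/2}R^n$; non-trivial means self-dual and different from it. *)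

theory Defs
  imports "HOL-Number_Theory.Number_Theory"
begin

(* Ideals of a commutative ring (type-class style; the ring is the whole type) *)
definition is_ideal :: "'a::comm_ring_1 set \<Rightarrow> bool" where
  "is_ideal I \<longleftrightarrow> 0 \<in> I \<and> (\<forall>x\<in>I. \<forall>y\<in>I. x + y \<in> I) \<and> (\<forall>r. \<forall>x\<in>I. r * x \<in> I)"

definition is_maximal_ideal :: "'a::comm_ring_1 set \<Rightarrow> bool" where
  "is_maximal_ideal M \<longleftrightarrow> is_ideal M \<and> M \<noteq> UNIV \<and>
     (\<forall>J. is_ideal J \<and> M \<subseteq> J \<longrightarrow> J = M \<or> J = UNIV)"

definition local_ring :: "'a::comm_ring_1 itself \<Rightarrow> bool" where
  "local_ring _ \<longleftrightarrow> (\<exists>!M::'a set. is_maximal_ideal M)"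

definition finite_chain_ring :: "'a::comm_ring_1 itself \<Rightarrow> bool" where
  "finite_chain_ring T \<longleftrightarrow> finite (UNIV :: 'a set) \<and> local_ring T \<and>
     (\<forall>I J :: 'a set. is_ideal I \<and> is_ideal J \<longrightarrow> I \<subseteq> J \<or> J \<subseteq> I)"

definition principal_ideal :: "'a::comm_ring_1 \<Rightarrow> 'a set" where
  "principal_ideal g = range (\<lambda>x. g * x)"

definition nilpotency_index :: "'a::comm_ring_1 \<Rightarrow> nat \<Rightarrow> bool" where
  "nilpotency_index g e \<longleftrightarrow> g ^ e = 0 \<and> (\<forall>k<e. g ^ k \<noteq> 0)"

definition quotient_ring :: "'a::comm_ring_1 set \<Rightarrow> 'a set set" where
  "quotient_ring I = (\<lambda>x. {x + y | y. y \<in> I}) ` UNIV"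

definition words :: "nat \<Rightarrow> (nat \<Rightarrow> 'a::zero) set" where
  "words n = {v. \<forall>i\<ge>n. v i = 0}"

definition linear_code :: "nat \<Rightarrow> (nat \<Rightarrow> 'a::comm_ring_1) set \<Rightarrow> bool" where
  "linear_code n C \<longleftrightarrow> C \<subseteq> words n \<and> (\<lambda>i. 0) \<in> C \<and> (\<forall>u\<in>C. \<forall>v\<in>C. (\<lambda>i. u i + v i) \<in> C)
     \<and> (\<forall>r. \<forall>v\<in>C. (\<lambda>i. r * v i) \<in> C)"

(* cyclic shift (c_0,...,c_{n-1}) |-> (c_{n-1},c_0,...,c_{n-2}) *)
definition cyc_shift :: "nat \<Rightarrow> (nat \<Rightarrow> 'a::zero) \<Rightarrow> nat \<Rightarrow> 'a" where
  "cyc_shift n v = (\<lambda>i. if i < n then v ((i + n - 1) mod n) else 0)"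

definition cyclic_code :: "nat \<Rightarrow> (nat \<Rightarrow> 'a::comm_ring_1) set \<Rightarrow> bool" where
  "cyclic_code n C \<longleftrightarrow> linear_code n C \<and> (\<forall>v\<in>C. cyc_shift n v \<in> C)"

definition code_inner :: "nat \<Rightarrow> (nat \<Rightarrow> 'a::comm_ring_1) \<Rightarrow> (nat \<Rightarrow> 'a) \<Rightarrow> 'a" where
  "code_inner n u v = (\<Sum>i<n. u i * v i)"

definition dual_code :: "nat \<Rightarrow> (nat \<Rightarrow> 'a::comm_ring_1) set \<Rightarrow> (nat \<Rightarrow> 'a) set" where
  "dual_code n C = {u \<in> words n. \<forall>v\<in>C. code_inner n u v = 0}"

definition self_dual :: "nat \<Rightarrow> (nat \<Rightarrow> 'a::comm_ring_1) set \<Rightarrow> bool" where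
  "self_dual n C \<longleftrightarrow> linear_code n C \<and> C = dual_code n C"

definition trivial_code :: "nat \<Rightarrow> 'a::comm_ring_1 \<Rightarrow> nat \<Rightarrow> (nat \<Rightarrow> 'a) set" where
  "trivial_code n g e = (\<lambda>x. (\<lambda>i. g ^ (e div 2) * x i)) ` words n"

end

theory Submission
  imports Defs "HOL-Computational_Algebra.Polynomial"
begin


locale chainr =
  fixes g :: "'a::comm_ring_1" and e :: nat
  assumes maxl: "is_maximal_ideal (principal_ideal g)"
  and nil: "nilpotency_index g e"
  and finR: "finite (UNIV::'a set)"
begin

abbreviation "M \<equiv> principal_ideal g"

lemma inM: "a \<in> M \<longleftrightarrow> (\<exists>y. a = g * y)"
  unfolding principal_ideal_def by auto

lemma M_ideal: "is_ideal M" using maxl unfolding is_maximal_ideal_def by auto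

lemma M_add: "a \<in> M \<Longrightarrow> b \<in> M \<Longrightarrow> a + b \<in> M"
  unfolding inM by (metis distrib_left)

lemma M_mult: "a \<in> M \<Longrightarrow> b * a \<in> M"
  unfolding inM by (metis mult.left_commute)

lemma M_mult2: "a \<in> M \<Longrightarrow> a * b \<in> M"
  using M_mult by (metis mult.commute)

lemma M_uminus: "a \<in> M \<Longrightarrow> - a \<in> M"
  using M_mult[of a "-1"] by simp

lemma M_diff: "a \<in> M \<Longrightarrow> b \<in> M \<Longrightarrow> a - b \<in> M"
  using M_add M_uminus by (metis diff_conv_add_uminus)

lemma M_0[simp]: "0 \<in> M" unfolding inM by (rule exI[of _ 0]) simp

lemma M_sum: "(\<And>i. i \<in> A \<Longrightarrow> f i \<in> M) \<Longrightarrow> sum f A \<in> M"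
  by (induct A rule: infinite_finite_induct) (auto intro: M_add)

lemma M_ne: "M \<noteq> UNIV" using maxl unfolding is_maximal_ideal_def by auto

lemma one_notin_M: "1 \<notin> M"
proof
  assume "1 \<in> M"
  then have "\<forall>x. x \<in> M" using M_mult[of 1] by auto
  then show False using M_ne by auto
qed

lemma ge: "g ^ e = 0" and gne: "\<And>k. k < e \<Longrightarrow> g ^ k \<noteq> 0"
  using nil unfolding nilpotency_index_def by auto

lemma e_pos: "e > 0" using ge by (cases e) auto

lemma g_in_M: "g \<in> M" by (auto simp: inM intro: exI[of _ 1])

lemma unit_notin_M: "a * b = 1 \<Longrightarrow> a \<notin> M"
  using M_mult2[of a b] one_notin_M by auto

lemma notin_M_unit: assumes "a \<notin> M" shows "\<exists>b. a * b = 1"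
proof -
  define J where "J = {m + a * r | m r. m \<in> M}"
  have "is_ideal J"
    unfolding is_ideal_def J_def
  proof (intro conjI ballI allI)
    show "0 \<in> {m + a * r |m r. m \<in> M}" by (intro CollectI exI[of _ 0]) auto
  next
    fix x y assume "x \<in> {m + a * r |m r. m \<in> M}" "y \<in> {m + a * r |m r. m \<in> M}"
    then obtain m1 r1 m2 r2 where "x = m1 + a*r1" "y = m2 + a*r2" "m1 \<in> M" "m2 \<in> M" by auto
    then show "x + y \<in> {m + a * r |m r. m \<in> M}"
      by (intro CollectI exI[of _ "m1+m2"] exI[of _ "r1+r2"]) (auto simp: algebra_simps M_add)
  next
    fix s x assume "x \<in> {m + a * r |m r. m \<in> M}"
    then obtain m1 r1 where "x = m1 + a*r1" "m1 \<in> M" by auto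
    then show "s * x \<in> {m + a * r |m r. m \<in> M}"
    proof (intro CollectI exI conjI)
      show "s * x = s * m1 + a * (s * r1)" using \<open>x = m1 + a*r1\<close> by (simp add: algebra_simps)
      show "s * m1 \<in> M" using M_mult \<open>m1 \<in> M\<close> by blast
    qed
  qed
  moreover have "M \<subseteq> J" unfolding J_def
  proof
    fix x assume "x \<in> M" then show "x \<in> {m + a * r |m r. m \<in> M}" by (intro CollectI exI[of _ x] exI[of _ 0]) simp
  qed
  moreover have "a \<in> J" unfolding J_def by (intro CollectI exI[of _ 0] exI[of _ 1]) simp
  ultimately have "J = UNIV" using maxl assms unfolding is_maximal_ideal_def by auto
  then obtain m r where mr: "1 = m + a * r" "m \<in> M" unfolding J_def by blast
  then obtain y where y: "m = g * y" by (auto simp: inM)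
  have me: "m ^ e = 0" using y ge by (simp add: power_mult_distrib)
  have "(1 - m) * (\<Sum>i<e. m ^ i) = 1 - m ^ e"
    by (simp add: one_diff_power_eq)
  moreover have "a * r = 1 - m" using mr by (simp add: algebra_simps)
  ultimately have "a * (r * (\<Sum>i<e. m ^ i)) = 1" using me by (metis mult.assoc diff_zero)
  then show ?thesis by blast
qed

lemma pow_notin_M: "a \<notin> M \<Longrightarrow> a ^ k \<notin> M"
proof -
  assume "a \<notin> M" then obtain b where "a * b = 1" using notin_M_unit by blast
  then have "a ^ k * b ^ k = 1" by (metis power_mult_distrib power_one)
  then show ?thesis using unit_notin_M by blast
qed

lemma mult_notin_M: "a \<notin> M \<Longrightarrow> b \<notin> M \<Longrightarrow> a * b \<notin> M"
proof -
  assume "a \<notin> M" "b \<notin> M"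
  then obtain a' b' where "a * a' = 1" "b * b' = 1" using notin_M_unit by blast
  then have "(a*b) * (a'*b') = 1" by (metis mult.left_commute mult.assoc mult_1_right)
  then show ?thesis using unit_notin_M by blast
qed

lemma ann_M: assumes "g ^ k * y = 0" "k < e" shows "y \<in> M"
proof (rule ccontr)
  assume "y \<notin> M" then obtain b where "y * b = 1" using notin_M_unit by blast
  then have "g ^ k = 0" using assms by (metis mult.assoc mult_1_right mult_zero_left)
  then show False using gne assms by auto
qed

lemma ann: assumes "g ^ k * y = 0" "k \<le> e" shows "\<exists>z. y = g ^ (e - k) * z"
proof (cases "y = 0")
  case True then show ?thesis by (auto intro: exI[of _ 0])
next
  case False
  define S where "S = {j. \<exists>z. y = g ^ j * z}"
  have Sb: "S \<subseteq> {..<e}"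
  proof
    fix j assume "j \<in> S" then obtain z where "y = g ^ j * z" unfolding S_def by auto
    then show "j \<in> {..<e}" using False ge
      by (metis lessThan_iff linorder_not_le mult_zero_left power_add le_add_diff_inverse)
  qed
  have "0 \<in> S" unfolding S_def by auto
  then have fS: "finite S" "S \<noteq> {}" using Sb finite_subset by auto
  define j where "j = Max S"
  have "j \<in> S" unfolding j_def using fS by simp
  then obtain u where u: "y = g ^ j * u" unfolding S_def by auto
  have "u \<notin> M"
  proof
    assume "u \<in> M" then obtain w where "u = g * w" by (auto simp: inM)
    then have "Suc j \<in> S" unfolding S_def using u by (auto simp: algebra_simps intro!: exI[of _ w])
    then show False using fS unfolding j_def by (meson Max_ge Suc_n_not_le_n)
  qed
  then obtain b where b: "u * b = 1" using notin_M_unit by blast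
  have "g ^ (k + j) * u = 0" using assms(1) u by (simp add: power_add algebra_simps)
  then have "g ^ (k + j) = 0" using b by (metis mult.assoc mult_1_right mult_zero_left)
  then have "k + j \<ge> e" using gne by (meson not_le)
  then have "y = g ^ (e - k) * (g ^ (j - (e - k)) * u)" using u assms(2)
    by (simp add: mult.assoc[symmetric] power_add[symmetric])
  then show ?thesis by blast
qed

end


locale chainq = chainr +
  fixes q :: nat
  assumes cardQ: "card (quotient_ring M) = q"
begin

definition coset :: "'a \<Rightarrow> 'a set" where "coset a = {a + y | y. y \<in> M}"

lemma Q_eq: "quotient_ring M = range coset"
  unfolding quotient_ring_def coset_def by simp

lemma coset_eq: "coset a = coset b \<longleftrightarrow> a - b \<in> M"
proof
  assume h: "coset a = coset b"
  have "a \<in> coset a" unfolding coset_def by (intro CollectI exI[of _ 0]) simp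
  then obtain y where "a = b + y" "y \<in> M" using h unfolding coset_def by auto
  then show "a - b \<in> M" by simp
next
  assume h: "a - b \<in> M"
  show "coset a = coset b"
  proof (rule equalityI; rule subsetI)
    fix x assume "x \<in> coset a" then obtain y where "x = a + y" "y \<in> M" unfolding coset_def by auto
    then show "x \<in> coset b" unfolding coset_def using h M_add
      by (intro CollectI exI[of _ "(a - b) + y"]) auto
  next
    fix x assume "x \<in> coset b" then obtain y where "x = b + y" "y \<in> M" unfolding coset_def by auto
    then show "x \<in> coset a" unfolding coset_def using h M_add M_uminus M_diff
      by (intro CollectI exI[of _ "y - (a - b)"]) auto
  qed
qed

definition rp :: "'a \<Rightarrow> 'a" where "rp a = (SOME x. x \<in> coset a)"

lemma rp_in: "rp a \<in> coset a"
proof -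
  have "a \<in> coset a" unfolding coset_def by (intro CollectI exI[of _ 0]) simp
  then show ?thesis unfolding rp_def by (rule someI)
qed

lemma rp_diff: "rp a - a \<in> M"
proof -
  obtain y where "rp a = a + y" "y \<in> M" using rp_in[of a] unfolding coset_def by auto
  then show ?thesis by simp
qed

lemma rp_diff2: "a - rp a \<in> M"
  using M_uminus[OF rp_diff[of a]] by simp

lemma rp_cong: "a - b \<in> M \<Longrightarrow> rp a = rp b"
  unfolding rp_def using coset_eq by metis

definition S :: "'a set" where "S = rp ` UNIV"

lemma finS: "finite S" unfolding S_def using finR by simp

lemma rp_S: "rp a \<in> S" unfolding S_def by simp

lemma rp_idem: "c \<in> S \<Longrightarrow> rp c = c"
  unfolding S_def using rp_cong rp_diff by auto

lemma S_inj: "c \<in> S \<Longrightarrow> c' \<in> S \<Longrightarrow> c - c' \<in> M \<Longrightarrow> c = c'"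
  using rp_cong rp_idem by metis

lemma card_S: "card S = q"
proof -
  have "bij_betw (\<lambda>X. rp (SOME a. X = coset a)) (quotient_ring M) S"
  proof (rule bij_betwI[where g = coset])
    show "(\<lambda>X. rp (SOME a. X = coset a)) \<in> quotient_ring M \<rightarrow> S" using rp_S by auto
    show "coset \<in> S \<rightarrow> quotient_ring M" unfolding Q_eq by auto
    fix X assume "X \<in> quotient_ring M"
    then obtain a where a: "X = coset a" unfolding Q_eq by auto
    then have "X = coset (SOME a. X = coset a)" by (metis (mono_tags) someI)
    moreover have "coset (rp b) = coset b" for b using coset_eq rp_diff by blast
    ultimately show "coset (rp (SOME a. X = coset a)) = X" by metis
  next
    fix c assume "c \<in> S"
    have "coset c = coset (SOME a. coset c = coset a)" by (metis (mono_tags) someI)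
    then have "rp (SOME a. coset c = coset a) = rp c" using rp_cong coset_eq by metis
    then show "rp (SOME a. coset c = coset a) = c" using rp_idem \<open>c \<in> S\<close> by simp
  qed
  then show ?thesis using cardQ bij_betw_same_card by metis
qed

lemma q_ge2: "q \<ge> 2"
proof -
  have "coset 0 \<noteq> coset 1" using coset_eq one_notin_M by (metis M_uminus diff_0 minus_minus)
  moreover have "finite (quotient_ring M)" unfolding Q_eq using finR by simp
  ultimately have "card {coset 0, coset 1} \<le> q" using cardQ unfolding Q_eq
    by (metis card_mono empty_subsetI insert_subset rangeI finite_imageI finR)
  then show ?thesis using \<open>coset 0 \<noteq> coset 1\<close> by simp
qed

lemma perm_S: assumes "\<And>c. c \<in> S \<Longrightarrow> f c \<in> S" "inj_on f S" shows "f ` S = S"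
  using endo_inj_surj[OF finS _ assms(2)] assms(1) by auto

lemma sum_cong_M: "(\<And>i. i \<in> A \<Longrightarrow> f i - h i \<in> M) \<Longrightarrow> sum f A - sum h A \<in> M"
proof (induct A rule: infinite_finite_induct)
  case (insert x F)
  have "sum f (insert x F) - sum h (insert x F) = (f x - h x) + (sum f F - sum h F)"
    using insert by (simp add: algebra_simps)
  moreover have "f x - h x \<in> M" using insert(4) by simp
  moreover have "sum f F - sum h F \<in> M" using insert(3,4) by simp
  ultimately show ?case using M_add by metis
qed auto

lemma prod_cong_M: "(\<And>i. i \<in> A \<Longrightarrow> f i - h i \<in> M) \<Longrightarrow> prod f A - prod h A \<in> M"
proof (induct A rule: infinite_finite_induct)
  case (insert x F)
  have "prod f (insert x F) - prod h (insert x F) = (f x - h x) * prod f F + h x * (prod f F - prod h F)"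
    using insert by (simp add: algebra_simps)
  moreover have "f x - h x \<in> M" using insert(4) by simp
  moreover have "prod f F - prod h F \<in> M" using insert(3,4) by simp
  ultimately show ?case using M_add M_mult M_mult2 by metis
qed auto

lemma qa_M: "of_nat q * a \<in> M"
proof -
  define f where "f c = rp (a + c)" for c
  have inj: "inj_on f S"
  proof
    fix c c' assume "c \<in> S" "c' \<in> S" "f c = f c'"
    then have "(a + c) - (a + c') \<in> M" unfolding f_def
      by (metis coset_eq rp_diff rp_in rp_def)
    then show "c = c'" using S_inj \<open>c \<in> S\<close> \<open>c' \<in> S\<close> by simp
  qed
  then have "f ` S = S" using perm_S rp_S unfolding f_def by auto
  then have "sum f S = sum (\<lambda>c. c) S" using sum.reindex[OF inj, of "\<lambda>c. c"] by simp
  moreover have "sum f S - sum (\<lambda>c. a + c) S \<in> M" by (rule sum_cong_M) (simp add: f_def rp_diff)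
  moreover have "sum (\<lambda>c. a + c) S = of_nat q * a + sum (\<lambda>c. c) S"
    using card_S by (simp add: sum.distrib)
  ultimately have "- (of_nat q * a) \<in> M" by simp
  then show ?thesis using M_uminus by fastforce
qed

lemma Frob_a: "a ^ q - a \<in> M"
proof (cases "a \<in> M")
  case True
  then have "a ^ q \<in> M" using q_ge2 M_mult2 by (metis power_0 power_Suc not_numeral_le_zero gr0_conv_Suc le_0_eq not_gr0)
  then show ?thesis using M_diff True by blast
next
  case False
  define S0 where "S0 = S - M"
  define f where "f c = rp (a * c)" for c
  have fin0: "finite S0" using finS S0_def by simp
  have inj: "inj_on f S0"
  proof
    fix c c' assume "c \<in> S0" "c' \<in> S0" "f c = f c'"
    then have "a * c - a * c' \<in> M" unfolding f_def by (metis coset_eq rp_diff rp_in rp_def)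
    then have "a * (c - c') \<in> M" by (simp add: algebra_simps)
    then have "c - c' \<in> M" using False mult_notin_M by blast
    then show "c = c'" using S_inj \<open>c \<in> S0\<close> \<open>c' \<in> S0\<close> S0_def by simp
  qed
  have maps: "f c \<in> S0" if "c \<in> S0" for c
  proof -
    have "a * c \<notin> M" using that False mult_notin_M S0_def by auto
    moreover have "f c - a * c \<in> M" unfolding f_def by (rule rp_diff)
    ultimately have "f c \<notin> M"
    proof (intro notI)
      assume "a * c \<notin> M" "f c - a * c \<in> M" "f c \<in> M"
      then have "f c - (f c - a * c) \<in> M" using M_diff by blast
      then show False using \<open>a * c \<notin> M\<close> by simp
    qed
    then show ?thesis using rp_S S0_def f_def by auto
  qed
  have "f ` S0 = S0" using endo_inj_surj[OF fin0 _ inj] maps by auto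
  then have e1: "prod f S0 = prod (\<lambda>c. c) S0" using prod.reindex[OF inj, of "\<lambda>c. c"] by simp
  have e2: "prod f S0 - prod (\<lambda>c. a * c) S0 \<in> M" by (rule prod_cong_M) (simp add: f_def rp_diff)
  have cS0: "card S0 = q - 1"
  proof -
    have "S \<inter> M = {rp 0}"
    proof
      show "S \<inter> M \<subseteq> {rp 0}"
      proof
        fix c assume "c \<in> S \<inter> M"
        moreover have "rp 0 \<in> M" using rp_diff[of 0] by simp
        ultimately have "c - rp 0 \<in> M" using M_diff by blast
        then show "c \<in> {rp 0}" using S_inj rp_S \<open>c \<in> S \<inter> M\<close> by blast
      qed
      show "{rp 0} \<subseteq> S \<inter> M" using rp_S rp_diff[of 0] by simp
    qed
    then have "S0 = S - {rp 0}" unfolding S0_def by blast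
    moreover have "rp 0 \<in> S" by (rule rp_S)
    ultimately show ?thesis using card_S finS by simp
  qed
  have e3: "prod (\<lambda>c. a * c) S0 = a ^ (q - 1) * prod (\<lambda>c. c) S0"
    using cS0 by (simp add: prod.distrib)
  have P: "prod (\<lambda>c. c) T \<notin> M" if "T \<subseteq> S0" for T
    using finite_subset[OF that fin0] that
  proof (induct T rule: finite_induct)
    case empty then show ?case using one_notin_M by simp
  next
    case (insert x F) then show ?case using mult_notin_M S0_def by auto
  qed
  have "(a ^ (q - 1) - 1) * prod (\<lambda>c. c) S0 \<in> M"
    using e1 e2 e3 by (simp add: algebra_simps) (metis M_uminus minus_diff_eq)
  then have "a ^ (q - 1) - 1 \<in> M" using P[of S0] mult_notin_M by blast
  then have "a * (a ^ (q - 1) - 1) \<in> M" using M_mult by blast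
  moreover have "a * (a ^ (q - 1) - 1) = a ^ q - a"
  proof -
    have "q = Suc (q - 1)" using q_ge2 by simp
    then have "a ^ q = a * a ^ (q - 1)" by (metis power_Suc)
    then show ?thesis by (simp add: algebra_simps)
  qed
  ultimately show ?thesis by simp
qed

end


lemma pcompose_monom_monom: "pcompose (monom c k) (monom (1::'a::comm_ring_1) m) = monom c (k * m)"
proof -
  have X: "pcompose ([:0, 1:] :: 'a poly) Q = Q" for Q by (simp add: pcompose_pCons)
  have "pcompose ([:0, 1:] ^ k) (monom (1::'a) m) = monom 1 m ^ k"
  proof (induct k)
    case 0 then show ?case by (simp add: pcompose_1)
  next
    case (Suc k) then show ?case by (metis power_Suc pcompose_mult X)
  qed
  then show ?thesis by (simp add: monom_altdef[of c k] pcompose_smult monom_power mult.commute smult_monom)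
qed

locale cycl =
  fixes n :: nat
  assumes n_pos: "n > 0"
begin

definition red :: "'a::comm_ring_1 poly \<Rightarrow> nat \<Rightarrow> 'a" where
  "red F = (\<lambda>i. if i < n then (\<Sum>j\<le>degree F. if j mod n = i then coeff F j else 0) else 0)"

definition wp :: "(nat \<Rightarrow> 'a::comm_ring_1) \<Rightarrow> 'a poly" where
  "wp w = (\<Sum>i<n. monom (w i) i)"

definition xn :: "'a::comm_ring_1 poly" where "xn = monom 1 n - 1"

definition cn :: "'a::comm_ring_1 poly \<Rightarrow> 'a poly \<Rightarrow> bool" where
  "cn F G \<longleftrightarrow> xn dvd (F - G)"

lemma red_alt: assumes "degree F < N"
  shows "red F i = (if i < n then (\<Sum>j<N. if j mod n = i then coeff F j else 0) else 0)"
proof -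
  have "(\<Sum>j\<le>degree F. if j mod n = i then coeff F j else 0) = (\<Sum>j<N. if j mod n = i then coeff F j else 0)"
    by (rule sum.mono_neutral_left) (use assms in \<open>auto simp: coeff_eq_0\<close>)
  then show ?thesis unfolding red_def by simp
qed

lemma red_add: "red (F + G) = (\<lambda>i. red F i + red G i)"
proof
  fix i
  define N where "N = Suc (max (degree F) (degree G))"
  have "degree (F + G) < N" "degree F < N" "degree G < N" unfolding N_def
    using degree_add_le_max[of F G] by auto
  moreover have "\<forall>j. (if j mod n = i then coeff (F + G) j else 0) = (if j mod n = i then coeff F j else 0) + (if j mod n = i then coeff G j else 0)"
    by simp
  ultimately show "red (F + G) i = red F i + red G i"
    by (simp add: red_alt sum.distrib)
qed

lemma red_smult: "red (smult c F) = (\<lambda>i. c * red F i)"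
proof
  fix i
  define N where "N = Suc (degree F)"
  have "degree (smult c F) < N" "degree F < N" using degree_smult_le[of c F] by (auto simp: N_def)
  moreover have "\<forall>j. (if j mod n = i then coeff (smult c F) j else 0) = c * (if j mod n = i then coeff F j else 0)"
    by simp
  ultimately show "red (smult c F) i = c * red F i"
    by (simp add: red_alt sum_distrib_left)
qed

lemma red_0: "red 0 = (\<lambda>i. 0)" unfolding red_def by (auto intro!: ext sum.neutral)

lemma red_uminus: "red (- F) = (\<lambda>i. - red F i)"
  using red_smult[of "-1" F] by simp

lemma red_diff: "red (F - G) = (\<lambda>i. red F i - red G i)"
  unfolding diff_conv_add_uminus red_add red_uminus by simp

lemma red_sum: "red (\<Sum>x\<in>A. f x) = (\<lambda>i. \<Sum>x\<in>A. red (f x) i)"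
  by (induct A rule: infinite_finite_induct) (simp_all add: red_0 red_add)

lemma red_monom: "red (monom c j) = (\<lambda>i. if i < n \<and> i = j mod n then c else 0)"
proof
  fix i
  have "degree (monom c j) < Suc j" using degree_monom_le[of c j] by simp
  then have "red (monom c j) i = (if i < n then (\<Sum>l<Suc j. if l mod n = i then coeff (monom c j) l else 0) else 0)"
    by (rule red_alt)
  also have "\<dots> = (if i < n \<and> i = j mod n then c else 0)"
    by (auto simp: sum.delta' split: if_splits) (auto intro: sum.neutral)
  finally show "red (monom c j) i = (if i < n \<and> i = j mod n then c else 0)" .
qed

lemma red_words: "red F \<in> words n" unfolding words_def red_def by auto

lemma red_wp: assumes "w \<in> words n" shows "red (wp w) = w"
proof
  fix i
  show "red (wp w) i = w i"
    using assms unfolding wp_def words_def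
    by (cases "i < n") (auto simp: red_sum red_monom)
qed

lemma red_ext: "(\<And>i. i < n \<Longrightarrow> red F i = red G i) \<Longrightarrow> red F = red G"
  by (rule ext) (metis red_def)

lemma xn_dvd_monom: "xn dvd (monom c j - monom c (j mod n))"
proof -
  have "monom c j = monom c (j mod n) * monom 1 n ^ (j div n)"
    by (simp add: mult_monom monom_power)
  moreover have "xn dvd (monom 1 n ^ (j div n) - 1)"
    unfolding xn_def by (simp add: power_diff_1_eq)
  moreover have "monom c j - monom c (j mod n) = monom c (j mod n) * (monom 1 n ^ (j div n) - 1)"
    using calculation(1) by (simp add: algebra_simps)
  ultimately show ?thesis by (metis dvd_mult)
qed

lemma cn_refl: "cn F F" unfolding cn_def by simp
lemma cn_sym: "cn F G \<Longrightarrow> cn G F" unfolding cn_def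
proof -
  assume "xn dvd F - G" then have "xn dvd - (F - G)" by (simp only: dvd_minus_iff)
  then show "xn dvd G - F" by simp
qed
lemma cn_trans: "cn F G \<Longrightarrow> cn G H \<Longrightarrow> cn F H" unfolding cn_def
proof -
  assume "xn dvd F - G" "xn dvd G - H" then have "xn dvd (F - G) + (G - H)" by (rule dvd_add)
  then show "xn dvd F - H" by simp
qed
lemma cn_add: "cn F G \<Longrightarrow> cn F' G' \<Longrightarrow> cn (F + F') (G + G')" unfolding cn_def
proof -
  assume "xn dvd F - G" "xn dvd F' - G'" then have "xn dvd (F - G) + (F' - G')" by (rule dvd_add)
  then show "xn dvd (F + F') - (G + G')" by (simp add: algebra_simps)
qed
lemma cn_diff: "cn F G \<Longrightarrow> cn F' G' \<Longrightarrow> cn (F - F') (G - G')" unfolding cn_def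
proof -
  assume "xn dvd F - G" "xn dvd F' - G'" then have "xn dvd (F - G) - (F' - G')" by (rule dvd_diff)
  then show "xn dvd (F - F') - (G - G')" by (simp add: algebra_simps)
qed
lemma cn_mult: "cn F G \<Longrightarrow> cn F' G' \<Longrightarrow> cn (F * F') (G * G')" unfolding cn_def
proof -
  assume a: "xn dvd F - G" "xn dvd F' - G'"
  have "F * F' - G * G' = (F - G) * F' + G * (F' - G')" by (simp add: algebra_simps)
  moreover have "xn dvd (F - G) * F' + G * (F' - G')" using a by (intro dvd_add dvd_mult dvd_mult2)
  ultimately show "xn dvd F * F' - G * G'" by simp
qed
lemma cn_smult: "cn F G \<Longrightarrow> cn (smult c F) (smult c G)"
proof -
  assume "cn F G" from cn_mult[OF cn_refl[of "[:c:]"] this] show ?thesis by simp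
qed
lemma cn_power: "cn F G \<Longrightarrow> cn (F ^ k) (G ^ k)"
  by (induct k) (simp_all add: cn_refl cn_mult)

lemma cn_sum: "(\<And>x. x \<in> A \<Longrightarrow> cn (f x) (h x)) \<Longrightarrow> cn (sum f A) (sum h A)"
  by (induct A rule: infinite_finite_induct) (simp_all add: cn_refl cn_add)

lemma cn_wp_red: "cn F (wp (red F))"
proof -
  have "wp (red F) = (\<Sum>i<n. monom (\<Sum>j\<le>degree F. if j mod n = i then coeff F j else 0) i)"
    unfolding wp_def red_def by simp
  also have "\<dots> = (\<Sum>i<n. \<Sum>j\<le>degree F. if j mod n = i then monom (coeff F j) i else 0)"
    by (auto simp: monom_sum intro!: sum.cong)
  also have "\<dots> = (\<Sum>j\<le>degree F. \<Sum>i<n. if j mod n = i then monom (coeff F j) i else 0)"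
    by (rule sum.swap)
  also have "\<dots> = (\<Sum>j\<le>degree F. monom (coeff F j) (j mod n))"
    using n_pos by (simp add: sum.delta)
  finally have 1: "wp (red F) = (\<Sum>j\<le>degree F. monom (coeff F j) (j mod n))" .
  have "cn (\<Sum>j\<le>degree F. monom (coeff F j) j) (\<Sum>j\<le>degree F. monom (coeff F j) (j mod n))"
    by (rule cn_sum) (simp add: cn_def xn_dvd_monom)
  then show ?thesis using 1 poly_as_sum_of_monoms[of F] by simp
qed

lemma red_xn_mult: "red (monom 1 n * F) = red F"
proof -
  have "red (monom 1 n * F) = red (\<Sum>j\<le>degree F. monom (coeff F j) (n + j))"
    by (subst (1) poly_as_sum_of_monoms[symmetric, of F]) (simp add: sum_distrib_left mult_monom)
  also have "\<dots> = red (\<Sum>j\<le>degree F. monom (coeff F j) j)"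
    unfolding red_sum by (rule ext, rule sum.cong) (auto simp only: red_monom mod_add_self1)
  finally show ?thesis unfolding poly_as_sum_of_monoms .
qed

lemma red_xn_dvd: "xn dvd H \<Longrightarrow> red H = (\<lambda>i. 0)"
proof -
  assume "xn dvd H" then obtain K where "H = xn * K" by blast
  then have "H = monom 1 n * K - K" unfolding xn_def by (simp add: algebra_simps)
  then show ?thesis by (simp add: red_diff red_xn_mult)
qed

lemma cn_red: "cn F G \<longleftrightarrow> red F = red G"
proof
  assume "cn F G" then show "red F = red G" unfolding cn_def
  proof -
    assume "xn dvd F - G" then have "red (F - G) = (\<lambda>i. 0)" by (rule red_xn_dvd)
    then have "\<forall>i. red F i - red G i = 0" unfolding red_diff by metis
    then show ?thesis by auto
  qed
next
  assume h: "red F = red G"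
  show "cn F G" using cn_wp_red[of F] cn_wp_red[of G] h cn_sym cn_trans by metis
qed

end


context cycl begin

definition star :: "'a::comm_ring_1 poly \<Rightarrow> 'a poly" where
  "star F = pcompose F (monom 1 (n - 1))"

lemma star_mult: "star (F * G) = star F * star G" unfolding star_def by (rule pcompose_mult)
lemma star_add: "star (F + G) = star F + star G" unfolding star_def by (rule pcompose_add)
lemma star_diff: "star (F - G) = star F - star G" unfolding star_def by (rule pcompose_diff)
lemma star_1: "star 1 = 1" unfolding star_def by (rule pcompose_1)
lemma star_const: "star [:c:] = [:c:]" unfolding star_def by simp
lemma star_smult: "star (smult c F) = smult c (star F)" unfolding star_def by (rule pcompose_smult)
lemma star_power: "star (F ^ k) = star F ^ k" by (induct k) (simp_all add: star_1 star_mult)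
lemma star_monom: "star (monom c k) = monom c (k * (n - 1))" unfolding star_def by (rule pcompose_monom_monom)

lemma poly_monoms: "F = (\<Sum>j\<le>degree F. monom (coeff F j) j)"
  by (simp add: poly_as_sum_of_monoms)

lemma cn_monom: "a mod n = b mod n \<Longrightarrow> cn (monom c a) (monom c b)"
proof -
  assume h: "a mod n = b mod n"
  have 1: "cn (monom c a) (monom c (a mod n))" unfolding cn_def by (rule xn_dvd_monom)
  have 2: "cn (monom c b) (monom c (a mod n))" unfolding cn_def h by (rule xn_dvd_monom)
  show ?thesis by (rule cn_trans[OF 1 cn_sym[OF 2]])
qed

lemma pcomp_xn: "xn dvd pcompose xn (monom (1::'a::comm_ring_1) m)"
proof -
  have "pcompose xn (monom (1::'a) m) = monom 1 n ^ m - 1"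
    unfolding xn_def by (simp add: pcompose_diff pcompose_monom_monom monom_power mult.commute pcompose_1)
  then show ?thesis unfolding xn_def by (simp add: power_diff_1_eq)
qed

lemma cn_pcomp: "cn F G \<Longrightarrow> cn (pcompose F (monom 1 m)) (pcompose G (monom 1 m))"
  unfolding cn_def
proof -
  assume "xn dvd F - G" then obtain K where "F - G = xn * K" by blast
  then have "pcompose F (monom 1 m) - pcompose G (monom 1 m) = pcompose xn (monom 1 m) * pcompose K (monom 1 m)"
    by (metis pcompose_diff pcompose_mult)
  then show "xn dvd pcompose F (monom 1 m) - pcompose G (monom 1 m)" by (metis pcomp_xn dvd_mult2)
qed

lemma cn_star: "cn F G \<Longrightarrow> cn (star F) (star G)" unfolding star_def by (rule cn_pcomp)

lemma pcomp_monoms: "pcompose (F::'a::comm_ring_1 poly) (monom 1 m) = (\<Sum>j\<le>degree F. monom (coeff F j) (j * m))"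
  by (subst (1) poly_monoms) (simp only: pcompose_sum pcompose_monom_monom)

lemma cn_pcomp2: assumes "m mod n = m' mod n"
  shows "cn (pcompose F (monom 1 m)) (pcompose F (monom 1 m'))"
  unfolding pcomp_monoms
proof (rule cn_sum, rule cn_monom)
  fix j show "j * m mod n = j * m' mod n" using assms by (metis mod_mult_right_eq)
qed

lemma sq_mod: "((n - 1) * (n - 1)) mod n = 1 mod n"
proof (cases n)
  case 0 then show ?thesis using n_pos by simp
next
  case (Suc m)
  show ?thesis
  proof (cases m)
    case 0 then show ?thesis using Suc by simp
  next
    case (Suc k)
    have "(n - 1) * (n - 1) = n * k + 1" using Suc \<open>n = Suc m\<close> by (simp add: algebra_simps)
    then have "(n - 1) * (n - 1) = 1 + n * k" by simp
    then show ?thesis by (metis mod_mult_self2 mult.commute)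
  qed
qed

lemma star_star: "cn (star (star F)) (F::'a::comm_ring_1 poly)"
proof -
  have "star (star F) = pcompose F (monom 1 ((n - 1) * (n - 1)))"
    unfolding star_def by (simp add: pcompose_assoc[symmetric] pcompose_monom_monom)
  moreover have "cn (pcompose F (monom 1 ((n - 1) * (n - 1)))) (pcompose F (monom 1 1))"
    using sq_mod by (rule cn_pcomp2)
  moreover have "pcompose F (monom 1 1) = F"
  proof -
    have "monom (1::'a) 1 = [:0, 1:]" by (simp add: monom_Suc monom_0)
    then show ?thesis by simp
  qed
  ultimately show ?thesis by simp
qed

lemma red_shift: assumes "i < n" "j < n" "(j + m) mod n = i"
  shows "red (monom 1 m * H) i = red H j"
proof -
  have e1: "red (monom 1 m * H) i = (\<Sum>l\<le>degree H. red (monom (coeff H l) (m + l)) i)"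
    by (subst (1) poly_monoms[of H]) (simp add: sum_distrib_left mult_monom red_sum)
  have e2: "red H j = (\<Sum>l\<le>degree H. red (monom (coeff H l) l) j)"
    by (subst (1) poly_monoms[of H]) (simp add: red_sum)
  have "(i = (m + l) mod n) \<longleftrightarrow> (j = l mod n)" for l
  proof
    assume "i = (m + l) mod n"
    then have "(j + m) mod n = (l + m) mod n" using assms by (simp add: add.commute)
    then have "[j = l] (mod n)" using cong_add_rcancel_nat unfolding cong_def by blast
    then show "j = l mod n" using assms(2) unfolding cong_def by simp
  next
    assume "j = l mod n"
    then show "i = (m + l) mod n" using assms(3) by (metis mod_add_left_eq add.commute)
  qed
  then show ?thesis unfolding e1 e2 red_monom using assms by simp
qed

lemma red_x: "red (monom 1 1 * H) = cyc_shift n (red H)"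
proof (rule ext)
  fix i
  show "red (monom 1 1 * H) i = cyc_shift n (red H) i"
  proof (cases "i < n")
    case True
    have "((i + n - 1) mod n + 1) mod n = (i + n - 1 + 1) mod n" by (rule mod_add_left_eq)
    also have "i + n - 1 + 1 = i + n" using n_pos by simp
    finally have "((i + n - 1) mod n + 1) mod n = i" using True by simp
    then show ?thesis unfolding cyc_shift_def using True n_pos by (simp add: red_shift)
  next
    case False then show ?thesis unfolding cyc_shift_def red_def by simp
  qed
qed

lemma inner_wp: assumes "u \<in> words n" "v \<in> words n"
  shows "code_inner n u v = red (wp u * star (wp v)) 0"
proof -
  have 1: "star (wp v) = (\<Sum>j<n. monom (v j) (j * (n - 1)))"
    unfolding wp_def star_def by (simp only: pcompose_sum pcompose_monom_monom)
  have 2: "wp u * star (wp v) = (\<Sum>i<n. \<Sum>j<n. monom (u i * v j) (i + j * (n - 1)))"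
    unfolding 1 by (simp only: wp_def sum_product mult_monom)
  have "red (wp u * star (wp v)) 0 = (\<Sum>i<n. \<Sum>j<n. if 0 < n \<and> 0 = (i + j * (n - 1)) mod n then u i * v j else 0)"
    unfolding 2 red_sum red_monom ..
  also have "\<dots> = (\<Sum>i<n. \<Sum>j<n. if (i + j * (n - 1)) mod n = 0 then u i * v j else 0)"
    using n_pos by (intro sum.cong refl) auto
  also have "\<dots> = (\<Sum>i<n. \<Sum>j<n. if j = i then u i * v j else 0)"
  proof (intro sum.cong refl)
    fix i j assume "i \<in> {..<n}" "j \<in> {..<n}"
    have "(i + j * (n - 1)) mod n = 0 \<longleftrightarrow> j = i"
    proof
      assume h: "(i + j * (n - 1)) mod n = 0"
      have "i + j * (n - 1) + j = i + j * n" using n_pos by (cases n) (auto simp: algebra_simps)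
      then have "(i + j * (n - 1) + j) mod n = (i + j * n) mod n" by (rule arg_cong)
      then have "(i + j * (n - 1) + j) mod n = i mod n" by simp
      then have "j mod n = i mod n" using h by (metis mod_add_left_eq add_0)
      then show "j = i" using \<open>i \<in> {..<n}\<close> \<open>j \<in> {..<n}\<close> by simp
    next
      assume "j = i"
      then have "i + j * (n - 1) = i * n" using n_pos by (cases n) (auto simp: algebra_simps)
      then show "(i + j * (n - 1)) mod n = 0" by simp
    qed
    then show "(if (i + j * (n - 1)) mod n = 0 then u i * v j else 0) = (if j = i then u i * v j else 0)"
      by simp
  qed
  also have "\<dots> = code_inner n u v" unfolding code_inner_def by simp
  finally show ?thesis by simp
qed

end


locale setting = chainq g e q + cycl n for g :: "'a::comm_ring_1" and e q n +
  fixes p r :: nat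
  assumes p_prime: "prime p" and q_def: "q = p ^ r" and cop: "coprime n p"
begin

lemma p_M: "of_nat p \<in> M"
proof (rule ccontr)
  assume "of_nat p \<notin> M"
  then have "(of_nat p :: 'a) ^ r \<notin> M" by (rule pow_notin_M)
  moreover have "(of_nat q :: 'a) \<in> M" using qa_M[of 1] by simp
  ultimately show False unfolding q_def by (simp add: of_nat_power)
qed

lemma cop_q: "coprime n (q ^ j)" using cop unfolding q_def by (simp add: power_mult[symmetric])

definition MX :: "'a poly \<Rightarrow> bool" where "MX F \<longleftrightarrow> (\<forall>i. coeff F i \<in> M)"

definition inJ :: "'a poly \<Rightarrow> bool" where "inJ F \<longleftrightarrow> (\<forall>i. red F i \<in> M)"

lemma MX_add: "MX A \<Longrightarrow> MX B \<Longrightarrow> MX (A + B)" unfolding MX_def by (simp add: M_add)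
lemma MX_diff: "MX A \<Longrightarrow> MX B \<Longrightarrow> MX (A - B)" unfolding MX_def by (simp add: M_diff)
lemma MX_0: "MX 0" unfolding MX_def by simp
lemma MX_mult: "MX A \<Longrightarrow> MX (B * A)" unfolding MX_def
  by (auto simp: coeff_mult intro!: M_sum M_mult)
lemma MX_mult2: "MX A \<Longrightarrow> MX (A * B)" using MX_mult by (metis mult.commute)
lemma MX_sum: "(\<And>i. i \<in> A \<Longrightarrow> MX (f i)) \<Longrightarrow> MX (sum f A)"
  by (induct A rule: infinite_finite_induct) (auto intro: MX_add MX_0)

lemma MX_power_cong: "MX (X - Y) \<Longrightarrow> MX (X ^ k - Y ^ k)"
proof (induct k)
  case 0 then show ?case by (simp add: MX_0)
next
  case (Suc k)
  have "X ^ Suc k - Y ^ Suc k = X * (X ^ k - Y ^ k) + (X - Y) * Y ^ k" by (simp add: algebra_simps)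
  then show ?case using Suc MX_add MX_mult MX_mult2 by metis
qed

lemma MX_trans: "MX (A - B) \<Longrightarrow> MX (B - C) \<Longrightarrow> MX (A - C)"
  using MX_add[of "A - B" "B - C"] by simp

lemma MX_inJ: "MX F \<Longrightarrow> inJ F"
  unfolding MX_def inJ_def red_def by (auto intro!: M_sum)

lemma inJ_add: "inJ A \<Longrightarrow> inJ B \<Longrightarrow> inJ (A + B)" unfolding inJ_def by (simp add: red_add M_add)
lemma inJ_diff: "inJ A \<Longrightarrow> inJ B \<Longrightarrow> inJ (A - B)" unfolding inJ_def by (simp add: red_diff M_diff)
lemma inJ_0: "inJ 0" unfolding inJ_def by (simp add: red_0)
lemma inJ_cn: "inJ A \<Longrightarrow> cn A B \<Longrightarrow> inJ B" unfolding inJ_def using cn_red by metis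
lemma inJ_smult_g: "inJ (smult g Z)" unfolding inJ_def red_smult using M_mult g_in_M
  by (metis mult.commute)

lemma inJ_iff: "inJ F \<longleftrightarrow> (\<exists>Z. cn F (smult g Z))"
proof
  assume h: "inJ F"
  define z where "z i = (if i < n then (SOME y. red F i = g * y) else 0)" for i
  have z: "red F i = g * z i" for i
  proof (cases "i < n")
    case True
    have "\<exists>y. red F i = g * y" using h unfolding inJ_def inM by blast
    then have "red F i = g * (SOME y. red F i = g * y)" by (rule someI_ex)
    then show ?thesis unfolding z_def using True by simp
  next
    case False then show ?thesis unfolding z_def red_def by simp
  qed
  have "z \<in> words n" unfolding z_def words_def by simp
  then have "red (smult g (wp z)) = red F" unfolding red_smult by (simp add: red_wp) (rule ext, simp add: z)
  then have "cn F (smult g (wp z))" using cn_red by metis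
  then show "\<exists>Z. cn F (smult g Z)" by blast
next
  assume "\<exists>Z. cn F (smult g Z)"
  then show "inJ F" using inJ_smult_g inJ_cn cn_sym by metis
qed

lemma inJ_mult: "inJ A \<Longrightarrow> inJ (A * B)"
proof -
  assume "inJ A" then obtain Z where "cn A (smult g Z)" using inJ_iff by blast
  then have "cn (A * B) (smult g (Z * B))" using cn_mult[OF _ cn_refl] by fastforce
  then show ?thesis using inJ_iff by blast
qed

lemma inJ_mult2: "inJ A \<Longrightarrow> inJ (B * A)" using inJ_mult by (metis mult.commute)

lemma inJ_star: "inJ A \<Longrightarrow> inJ (star A)"
proof -
  assume "inJ A" then obtain Z where "cn A (smult g Z)" using inJ_iff by blast
  then have "cn (star A) (smult g (star Z))" using cn_star star_smult by metis
  then show ?thesis using inJ_iff by blast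
qed

lemma inJ_pow_e: "inJ A \<Longrightarrow> cn (A ^ e) 0"
proof -
  assume "inJ A" then obtain Z where "cn A (smult g Z)" using inJ_iff by blast
  then have "cn (A ^ e) (smult g Z ^ e)" by (rule cn_power)
  then show ?thesis by (simp add: smult_power ge)
qed

lemma idem_nil: assumes "inJ Y" "cn (Y * Y) Y" shows "cn Y 0"
proof -
  have "cn (Y ^ Suc k) Y" for k
  proof (induct k)
    case 0 then show ?case by (simp add: cn_refl)
  next
    case (Suc k)
    have "cn (Y ^ Suc (Suc k)) (Y * Y)" using cn_mult[OF cn_refl Suc] by simp
    then show ?case using assms(2) cn_trans by blast
  qed
  then have "cn (Y ^ e) Y" using e_pos by (metis Suc_pred)
  then show ?thesis using inJ_pow_e[OF assms(1)] cn_sym cn_trans by blast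
qed

lemma MX_of_nat_p: "MX (of_nat p * X)"
  unfolding MX_def of_nat_poly by (simp add: M_mult2 p_M)

lemma MX_binom: "MX ((A + B) ^ p - (A ^ p + B ^ p))"
proof -
  have p0: "p > 0" using p_prime prime_gt_0_nat by blast
  have "(A + B) ^ p = (\<Sum>k\<le>p. of_nat (p choose k) * A ^ k * B ^ (p - k))" by (rule binomial_ring)
  also have "\<dots> = (\<Sum>k\<in>{0, p}. of_nat (p choose k) * A ^ k * B ^ (p - k))
     + (\<Sum>k\<in>{1..<p}. of_nat (p choose k) * A ^ k * B ^ (p - k))"
  proof -
    have "{..p} = {0, p} \<union> {1..<p}" using p0 by auto
    then have "(\<Sum>k\<le>p. of_nat (p choose k) * A ^ k * B ^ (p - k)) = (\<Sum>k\<in>{0, p} \<union> {1..<p}. of_nat (p choose k) * A ^ k * B ^ (p - k))"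
      by (rule arg_cong)
    also have "\<dots> = (\<Sum>k\<in>{0, p}. of_nat (p choose k) * A ^ k * B ^ (p - k))
     + (\<Sum>k\<in>{1..<p}. of_nat (p choose k) * A ^ k * B ^ (p - k))"
      by (rule sum.union_disjoint) auto
    finally show ?thesis .
  qed
  also have "(\<Sum>k\<in>{0, p}. of_nat (p choose k) * A ^ k * B ^ (p - k)) = A ^ p + B ^ p"
    using p0 by (simp add: add.commute)
  finally have "(A + B) ^ p - (A ^ p + B ^ p) = (\<Sum>k\<in>{1..<p}. of_nat (p choose k) * A ^ k * B ^ (p - k))"
    by simp
  moreover have "MX (\<Sum>k\<in>{1..<p}. of_nat (p choose k) * A ^ k * B ^ (p - k))"
  proof (rule MX_sum)
    fix k assume k: "k \<in> {1..<p}"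
    then have "p dvd (p choose k)" using dvd_choose_prime[of k p] p_prime p0 by auto
    then obtain c where "p choose k = p * c" by blast
    then have "of_nat (p choose k) * A ^ k * B ^ (p - k) = of_nat p * (of_nat c * A ^ k * B ^ (p - k))"
      by (simp add: algebra_simps)
    then show "MX (of_nat (p choose k) * A ^ k * B ^ (p - k))" using MX_of_nat_p by metis
  qed
  ultimately show ?thesis by simp
qed

lemma MX_binom_pow: "MX ((A + B) ^ (p ^ s) - (A ^ (p ^ s) + B ^ (p ^ s)))"
proof (induct s)
  case 0 then show ?case by (simp add: MX_0)
next
  case (Suc s)
  have 1: "MX (((A + B) ^ (p ^ s)) ^ p - (A ^ (p ^ s) + B ^ (p ^ s)) ^ p)"
    using MX_power_cong[OF Suc] by simp
  have 2: "MX ((A ^ (p ^ s) + B ^ (p ^ s)) ^ p - ((A ^ (p ^ s)) ^ p + (B ^ (p ^ s)) ^ p))"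
    by (rule MX_binom)
  show ?case using MX_trans[OF 1 2] by (simp add: power_mult[symmetric] mult.commute)
qed

lemma frob_poly:
  assumes "\<forall>i. coeff F i ^ (p ^ s) - coeff F i \<in> M"
  shows "MX (F ^ (p ^ s) - pcompose F (monom 1 (p ^ s)))"
  using assms
proof (induct F)
  case 0
  have "p ^ s > 0" using p_prime prime_gt_0_nat by simp
  then have "(0::'a poly) ^ (p ^ s) = 0" by (simp add: zero_power)
  then show ?case by (simp add: MX_0)
next
  case (pCons a F)
  have P0: "p ^ s > 0" using p_prime prime_gt_0_nat by simp
  have hF: "\<forall>i. coeff F i ^ (p ^ s) - coeff F i \<in> M" using pCons(3) by (metis coeff_pCons_Suc)
  have ha: "a ^ (p ^ s) - a \<in> M" using pCons(3) by (metis coeff_pCons_0)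
  have IH: "MX (F ^ (p ^ s) - pcompose F (monom 1 (p ^ s)))" using pCons(2) hF by blast
  have e: "pCons a F = [:a:] + monom 1 1 * F" by (simp add: monom_Suc monom_0 pCons_eq_iff)
  have 1: "MX ((pCons a F) ^ (p ^ s) - ([:a:] ^ (p ^ s) + (monom 1 1 * F) ^ (p ^ s)))"
    unfolding e by (rule MX_binom_pow)
  have 2: "[:a:] ^ (p ^ s) + (monom 1 1 * F) ^ (p ^ s) = [:a ^ (p ^ s):] + monom 1 (p ^ s) * F ^ (p ^ s)"
    by (simp add: power_mult_distrib monom_power poly_const_pow)
  have 3: "pcompose (pCons a F) (monom 1 (p ^ s)) = [:a:] + monom 1 (p ^ s) * pcompose F (monom 1 (p ^ s))"
    by (simp add: pcompose_pCons)
  have 4: "[:a ^ (p ^ s):] + monom 1 (p ^ s) * F ^ (p ^ s) - ([:a:] + monom 1 (p ^ s) * pcompose F (monom 1 (p ^ s)))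
      = [:a ^ (p ^ s) - a:] + monom 1 (p ^ s) * (F ^ (p ^ s) - pcompose F (monom 1 (p ^ s)))"
    by (simp add: algebra_simps)
  have "MX [:a ^ (p ^ s) - a:]" unfolding MX_def using ha by (simp add: coeff_pCons split: nat.split)
  then have "MX ([:a ^ (p ^ s):] + monom 1 (p ^ s) * F ^ (p ^ s) - ([:a:] + monom 1 (p ^ s) * pcompose F (monom 1 (p ^ s))))"
    unfolding 4 using IH MX_add MX_mult by blast
  then show ?case using MX_trans[OF 1] 2 3 by simp
qed

lemma pow_cong_M: "a - b \<in> M \<Longrightarrow> a ^ k - b ^ k \<in> M"
proof (induct k)
  case 0 then show ?case by simp
next
  case (Suc k)
  have "a ^ Suc k - b ^ Suc k = a * (a ^ k - b ^ k) + (a - b) * b ^ k" by (simp add: algebra_simps)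
  then show ?case using Suc M_add M_mult M_mult2 by metis
qed

lemma frob_qj: "c ^ (q ^ j) - c \<in> M"
proof (induct j)
  case 0 then show ?case by simp
next
  case (Suc j)
  have "(c ^ (q ^ j)) ^ q - c ^ q \<in> M" using pow_cong_M[OF Suc] .
  moreover have "c ^ q - c \<in> M" by (rule Frob_a)
  ultimately have "(c ^ (q ^ j)) ^ q - c \<in> M" using M_add by fastforce
  then show ?case by (simp add: power_mult[symmetric] mult.commute)
qed

lemma frob_poly_q: "MX (F ^ (q ^ j) - pcompose F (monom 1 (q ^ j)))"
proof -
  have "q ^ j = p ^ (r * j)" unfolding q_def by (simp add: power_mult)
  then show ?thesis using frob_poly[of F "r * j"] frob_qj by metis
qed

lemma red_pcomp: assumes "i < n" "j < n" "(j * m) mod n = i" "coprime m n"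
  shows "red (pcompose F (monom 1 m)) i = red F j"
proof -
  have e1: "red (pcompose F (monom 1 m)) i = (\<Sum>l\<le>degree F. red (monom (coeff F l) (l * m)) i)"
    unfolding pcomp_monoms red_sum ..
  have e2: "red F j = (\<Sum>l\<le>degree F. red (monom (coeff F l) l) j)"
    by (subst (1) poly_monoms[of F]) (simp add: red_sum)
  have "(i = (l * m) mod n) \<longleftrightarrow> (j = l mod n)" for l
  proof -
    have "(i = (l * m) mod n) \<longleftrightarrow> [l * m = j * m] (mod n)" using assms(3) unfolding cong_def by auto
    also have "\<dots> \<longleftrightarrow> [l = j] (mod n)" using cong_mult_rcancel_nat assms(4) by blast
    also have "\<dots> \<longleftrightarrow> j = l mod n" using assms(2) unfolding cong_def by auto
    finally show ?thesis .
  qed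
  then show ?thesis unfolding e1 e2 red_monom using assms by simp
qed

lemma inJ_pcomp: assumes "inJ (pcompose F (monom 1 m))" "coprime m n" shows "inJ F"
  unfolding inJ_def
proof
  fix j show "red F j \<in> M"
  proof (cases "j < n")
    case True
    have "red (pcompose F (monom 1 m)) ((j * m) mod n) = red F j"
      using red_pcomp[OF _ True refl assms(2)] n_pos by simp
    then show ?thesis using assms(1) unfolding inJ_def by metis
  next
    case False then show ?thesis unfolding red_def by simp
  qed
qed

lemma reduced: assumes "inJ (F ^ k)" shows "inJ F"
proof -
  have q2: "q \<ge> 2" by (rule q_ge2)
  have "(2::nat) ^ k \<le> q ^ k" using q2 by (rule power_mono) simp
  then have "k < q ^ k" using less_exp[of k] by linarith
  then have "F ^ (q ^ k) = F ^ k * F ^ (q ^ k - k)" by (simp add: power_add[symmetric])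
  then have "inJ (F ^ (q ^ k))" using inJ_mult assms by metis
  moreover have "MX (F ^ (q ^ k) - pcompose F (monom 1 (q ^ k)))" by (rule frob_poly_q)
  ultimately have "inJ (F ^ (q ^ k) - (F ^ (q ^ k) - pcompose F (monom 1 (q ^ k))))"
    using MX_inJ inJ_diff by blast
  then have "inJ (pcompose F (monom 1 (q ^ k)))" by simp
  moreover have "coprime (q ^ k) n" using cop_q by (simp add: coprime_commute)
  ultimately show ?thesis by (rule inJ_pcomp)
qed

end


context setting begin

lemma wp_add: "wp (\<lambda>i. u i + v i) = wp u + wp v" unfolding wp_def by (rule poly_eqI) (simp add: coeff_sum sum.distrib)

lemma wp_smult: "wp (\<lambda>i. c * u i) = smult c (wp u)" unfolding wp_def by (rule poly_eqI) (simp add: coeff_sum sum_distrib_left)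

lemma cyc_mult: assumes "cyclic_code n C" "red F \<in> C" shows "red (G * F) \<in> C"
proof (induct G)
  case 0
  have "(\<lambda>i. 0) \<in> C" using assms(1) unfolding cyclic_code_def linear_code_def by blast
  then show ?case by (simp add: red_0)
next
  case (pCons a G)
  have e: "pCons a G * F = smult a F + monom 1 1 * (G * F)"
    by (simp add: monom_Suc monom_0)
  have 1: "red (smult a F) \<in> C" using assms unfolding cyclic_code_def linear_code_def red_smult by blast
  have 2: "red (monom 1 1 * (G * F)) \<in> C" using pCons(2) assms(1) unfolding red_x cyclic_code_def by blast
  show ?case unfolding e red_add using 1 2 assms(1) unfolding cyclic_code_def linear_code_def by blast
qed

lemma AC: assumes "cyclic_code n C" "u \<in> dual_code n C" "red F \<in> C"
  shows "red (wp u * star F) = (\<lambda>i. 0)"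
proof (rule ext)
  fix k
  show "red (wp u * star F) k = 0"
  proof (cases "k < n")
    case False then show ?thesis unfolding red_def by simp
  next
    case True
    define F' where "F' = monom 1 k * F"
    have "red F' \<in> C" unfolding F'_def using cyc_mult assms(1,3) by blast
    then have "code_inner n u (red F') = 0" using assms(2) unfolding dual_code_def by blast
    moreover have uw: "u \<in> words n" using assms(2) unfolding dual_code_def by blast
    ultimately have "red (wp u * star (wp (red F'))) 0 = 0" using inner_wp red_words by metis
    moreover have "cn (wp u * star (wp (red F'))) (wp u * star F')"
      by (intro cn_mult cn_refl cn_star cn_sym[OF cn_wp_red])
    ultimately have "red (wp u * star F') 0 = 0" using cn_red by metis
    moreover have "wp u * star F' = monom 1 (k * (n - 1)) * (wp u * star F)"
      unfolding F'_def star_mult star_monom by (simp add: algebra_simps)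
    moreover have "red (monom 1 (k * (n - 1)) * (wp u * star F)) 0 = red (wp u * star F) k"
    proof (rule red_shift)
      show "0 < n" using n_pos .
      show "k < n" using True .
      have "k + k * (n - 1) = k * n" using n_pos by (cases n) (auto simp: algebra_simps)
      then show "(k + k * (n - 1)) mod n = 0" by simp
    qed
    ultimately show ?thesis by simp
  qed
qed

lemma selfdual_sub: "self_dual n C \<Longrightarrow> w \<in> C \<Longrightarrow> w \<in> dual_code n C"
  unfolding self_dual_def by blast

lemma words_wp_red: "w \<in> words n \<Longrightarrow> red (wp w) = w" by (rule red_wp)

lemma inJ_cnJ: "cn A B \<Longrightarrow> inJ (A - B)"
  unfolding inJ_def by (simp add: cn_red red_diff)

lemma g_pow_div: assumes "w \<in> words n" "\<forall>l. \<exists>y. w l = g ^ t * y"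
  shows "\<exists>w'. w' \<in> words n \<and> w = (\<lambda>l. g ^ t * w' l)"
proof -
  define w' where "w' l = (if l < n then SOME y. w l = g ^ t * y else 0)" for l
  have "w l = g ^ t * w' l" for l
  proof (cases "l < n")
    case True
    have "\<exists>y. w l = g ^ t * y" using assms(2) by blast
    then have "w l = g ^ t * (SOME y. w l = g ^ t * y)" by (rule someI_ex)
    then show ?thesis unfolding w'_def using True by simp
  next
    case False then show ?thesis using assms(1) unfolding w'_def words_def by simp
  qed
  moreover have "w' \<in> words n" unfolding w'_def words_def by simp
  ultimately show ?thesis by blast
qed

theorem only_trivial:
  assumes Qc: "(q ^ j) mod n = n - 1" and ev: "even e"
    and sd: "self_dual n C" and cy: "cyclic_code n C"
  shows "C = trivial_code n g e"
proof -
  have Cw: "C \<subseteq> words n" using cy unfolding cyclic_code_def linear_code_def by blast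
  have main: "\<forall>w\<in>C. \<forall>l. \<exists>y. w l = g ^ t * y" if "t \<le> e div 2" for t
    using that
  proof (induct t)
    case 0 show ?case by (intro ballI allI, rule_tac x="w l" in exI) simp
  next
    case (Suc t)
    then have IH: "\<forall>w\<in>C. \<forall>l. \<exists>y. w l = g ^ t * y" and lt: "2 * t < e" using ev by auto
    show ?case
    proof (rule ccontr)
      assume "\<not> (\<forall>w\<in>C. \<forall>l. \<exists>y. w l = g ^ Suc t * y)"
      then obtain w i where wC: "w \<in> C" and ni: "\<not> (\<exists>y. w i = g ^ Suc t * y)" by blast
      obtain w' where w': "w' \<in> words n" "w = (\<lambda>l. g ^ t * w' l)"
        using g_pow_div[of w t] IH wC Cw by blast
      have w'i: "w' i \<notin> M"
      proof
        assume "w' i \<in> M" then obtain y where "w' i = g * y" by (auto simp: inM)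
        then have "w i = g ^ Suc t * y" using w' by (simp add: algebra_simps)
        then show False using ni by blast
      qed
      define F where "F = wp w'"
      have wpw: "wp w = smult (g ^ t) F" unfolding F_def w' by (rule wp_smult)
      have "w \<in> words n" using Cw wC by blast
      then have "red (wp w) = w" by (rule red_wp)
      then have "red (wp w) \<in> C" using wC by simp
      then have 0: "red (wp w * star (wp w)) = (\<lambda>i. 0)"
        by (rule AC[OF cy selfdual_sub[OF sd wC]])
      have "wp w * star (wp w) = smult (g ^ (2 * t)) (F * star F)"
        unfolding wpw star_smult by (simp add: power_add[symmetric] mult_2)
      then have 1: "red (smult (g ^ (2 * t)) (F * star F)) = (\<lambda>i. 0)" using 0 by simp
      have "g ^ (2 * t) * red (F * star F) i = 0" for i
        using fun_cong[OF 1, of i] unfolding red_smult by simp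
      then have "red (F * star F) i \<in> M" for i using ann_M[OF _ lt] by blast
      then have J1: "inJ (F * star F)" unfolding inJ_def by blast
      define Q where "Q = q ^ j"
      have "cn (pcompose F (monom 1 Q)) (star F)"
        unfolding star_def Q_def by (rule cn_pcomp2) (use Qc n_pos in simp)
      then have J2: "inJ (F * (pcompose F (monom 1 Q) - star F))"
        by (intro inJ_mult2 inJ_cnJ)
      have J3: "inJ (F * (F ^ Q - pcompose F (monom 1 Q)))"
        unfolding Q_def by (intro inJ_mult2 MX_inJ frob_poly_q)
      have "F * F ^ Q = F * (F ^ Q - pcompose F (monom 1 Q)) + F * (pcompose F (monom 1 Q) - star F) + F * star F"
        by (simp add: algebra_simps)
      moreover have "inJ (F * (F ^ Q - pcompose F (monom 1 Q)) + F * (pcompose F (monom 1 Q) - star F) + F * star F)"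
        by (intro inJ_add J1 J2 J3)
      ultimately have "inJ (F ^ Suc Q)" by simp
      then have "inJ F" by (rule reduced)
      then have "red F i \<in> M" unfolding inJ_def by blast
      then show False using w'i red_wp[OF w'(1)] unfolding F_def by simp
    qed
  qed
  define h where "h = e div 2"
  have he: "h + h = e" using ev unfolding h_def by (metis dvd_mult_div_cancel mult_2)
  have sub: "C \<subseteq> trivial_code n g e"
  proof
    fix w assume "w \<in> C"
    then obtain w' where "w' \<in> words n" "w = (\<lambda>l. g ^ h * w' l)"
      using g_pow_div[of w h] main[of h] Cw unfolding h_def by blast
    then show "w \<in> trivial_code n g e" unfolding trivial_code_def h_def by blast
  qed
  have "trivial_code n g e \<subseteq> dual_code n C"
  proof
    fix x assume "x \<in> trivial_code n g e"
    then obtain a where a: "a \<in> words n" "x = (\<lambda>i. g ^ h * a i)" unfolding trivial_code_def h_def by blast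
    have "x \<in> words n" using a unfolding words_def by simp
    moreover have "code_inner n x v = 0" if vC: "v \<in> C" for v
    proof -
      have "v \<in> trivial_code n g e" using sub vC by blast
      then obtain b where b: "v = (\<lambda>i. g ^ h * b i)" unfolding trivial_code_def h_def by blast
      have "code_inner n x v = (\<Sum>i<n. g ^ (h + h) * (a i * b i))"
        unfolding code_inner_def a b by (simp add: power_add algebra_simps)
      then show ?thesis using he ge by simp
    qed
    ultimately show "x \<in> dual_code n C" unfolding dual_code_def by blast
  qed
  then have "trivial_code n g e \<subseteq> C" using sd unfolding self_dual_def by blast
  then show ?thesis using sub by blast
qed

end


context setting begin

definition eqJ :: "'a poly \<Rightarrow> 'a poly \<Rightarrow> bool" where "eqJ A B \<longleftrightarrow> inJ (A - B)"

lemma eqJ_refl: "eqJ A A" unfolding eqJ_def by (simp add: inJ_0)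
lemma eqJ_sym: "eqJ A B \<Longrightarrow> eqJ B A" unfolding eqJ_def
  using inJ_diff[OF inJ_0, of "A - B"] by simp
lemma eqJ_trans: "eqJ A B \<Longrightarrow> eqJ B C \<Longrightarrow> eqJ A C" unfolding eqJ_def
  using inJ_add[of "A - B" "B - C"] by simp
lemma eqJ_add: "eqJ A B \<Longrightarrow> eqJ A' B' \<Longrightarrow> eqJ (A + A') (B + B')" unfolding eqJ_def
  using inJ_add[of "A - B" "A' - B'"] by (simp add: algebra_simps)
lemma eqJ_diff: "eqJ A B \<Longrightarrow> eqJ A' B' \<Longrightarrow> eqJ (A - A') (B - B')" unfolding eqJ_def
  using inJ_diff[of "A - B" "A' - B'"] by (simp add: algebra_simps)
lemma eqJ_mult: "eqJ A B \<Longrightarrow> eqJ A' B' \<Longrightarrow> eqJ (A * A') (B * B')" unfolding eqJ_def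
proof -
  assume "inJ (A - B)" "inJ (A' - B')"
  then have "inJ ((A - B) * A' + B * (A' - B'))" by (intro inJ_add inJ_mult inJ_mult2)
  moreover have "(A - B) * A' + B * (A' - B') = A * A' - B * B'" by (simp add: algebra_simps)
  ultimately show "inJ (A * A' - B * B')" by simp
qed
lemma eqJ_power: "eqJ A B \<Longrightarrow> eqJ (A ^ k) (B ^ k)"
  by (induct k) (simp_all add: eqJ_refl eqJ_mult)
lemma eqJ_cn: "cn A B \<Longrightarrow> eqJ A B" unfolding eqJ_def by (rule inJ_cnJ)
lemma eqJ_MX: "MX (A - B) \<Longrightarrow> eqJ A B" unfolding eqJ_def by (rule MX_inJ)
lemma eqJ_star: "eqJ A B \<Longrightarrow> eqJ (star A) (star B)" unfolding eqJ_def
  using inJ_star star_diff by metis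
lemma eqJ_0: "eqJ A 0 \<longleftrightarrow> inJ A" unfolding eqJ_def by simp

lemma idem_fixed:
  assumes H: "\<And>b. inJ (b * star b) \<Longrightarrow> inJ b"
    and idem: "eqJ (E * E) E"
  shows "eqJ E (E * star E)"
proof -
  define a where "a = E"
  define b where "b = star E"
  have ia: "inJ (a * a - a)" using idem unfolding eqJ_def a_def .
  have ib: "inJ (b * b - b)" using eqJ_star[OF idem] unfolding eqJ_def b_def star_mult .
  define F where "F = a - a * b"
  have "star F = b - b * star b" unfolding F_def a_def b_def by (simp add: star_diff star_mult)
  moreover have "eqJ (star b) a" unfolding a_def b_def by (rule eqJ_cn[OF star_star])
  ultimately have sF: "eqJ (star F) (b - a * b)"
    by (metis eqJ_diff eqJ_mult eqJ_refl mult.commute)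
  have "F * (b - a * b) = (a * a - a) * (b * b - b)" unfolding F_def by (simp add: algebra_simps power2_eq_square)
  then have "inJ (F * (b - a * b))" using ia inJ_mult by simp
  moreover have "eqJ (F * star F) (F * (b - a * b))" by (rule eqJ_mult[OF eqJ_refl sF])
  ultimately have "inJ (F * star F)" unfolding eqJ_def using inJ_add by (metis diff_add_cancel)
  then have "inJ F" by (rule H)
  then show ?thesis unfolding eqJ_def F_def a_def b_def .
qed

lemma idem_fixed2:
  assumes H: "\<And>b. inJ (b * star b) \<Longrightarrow> inJ b"
    and idem: "eqJ (E * E) E"
  shows "eqJ E (star E)"
proof -
  have 1: "eqJ E (E * star E)" by (rule idem_fixed[OF H idem])
  have idem2: "eqJ (star E * star E) (star E)" using eqJ_star[OF idem] by (simp add: star_mult)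
  have 2: "eqJ (star E) (star E * star (star E))" by (rule idem_fixed[OF H idem2])
  have "eqJ (star E * star (star E)) (star E * E)" by (rule eqJ_mult[OF eqJ_refl eqJ_cn[OF star_star]])
  then have "eqJ (star E) (E * star E)" using 2 eqJ_trans by (simp add: mult.commute)
  then show ?thesis using 1 eqJ_trans eqJ_sym by blast
qed

end


context setting begin

definition Orb :: "nat set" where "Orb = {i. i < n \<and> (\<exists>j. q ^ j mod n = i)}"
definition sO :: "'a poly" where "sO = (\<Sum>i\<in>Orb. monom 1 i)"

lemma finOrb: "finite Orb" unfolding Orb_def by simp

lemma red_sO: "red sO = (\<lambda>i. if i \<in> Orb then 1 else 0)"
proof
  fix i
  have "red sO i = (\<Sum>l\<in>Orb. if i < n \<and> i = l mod n then 1 else 0)"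
    unfolding sO_def red_sum red_monom ..
  also have "\<dots> = (\<Sum>l\<in>Orb. if i = l then 1 else 0)"
    by (rule sum.cong) (auto simp: Orb_def)
  also have "\<dots> = (if i \<in> Orb then 1 else 0)" using finOrb by simp
  finally show "red sO i = (if i \<in> Orb then 1 else 0)" .
qed

lemma cop_qn: "coprime q n" using cop_q[of 1] by (simp add: coprime_commute)

lemma euler_q: "q ^ totient n mod n = 1 mod n"
  using euler_theorem[OF cop_qn] unfolding cong_def .

lemma tot_pos: "totient n > 0" using n_pos by simp

lemma Oq: assumes "i < n" "l < n" "(l * q) mod n = i" shows "l \<in> Orb \<longleftrightarrow> i \<in> Orb"
proof
  assume "l \<in> Orb" then obtain j where j: "q ^ j mod n = l" unfolding Orb_def by blast
  have "q ^ Suc j mod n = (q ^ j mod n * q) mod n"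
    using mod_mult_left_eq[of "q ^ j" n q] by (metis power_Suc2)
  then have "q ^ Suc j mod n = i" using j assms(3) by simp
  then show "i \<in> Orb" unfolding Orb_def using assms(1) by blast
next
  assume "i \<in> Orb" then obtain j where j: "q ^ j mod n = i" unfolding Orb_def by blast
  define t where "t = totient n - 1"
  have tt: "totient n = Suc t" unfolding t_def using tot_pos by simp
  have "l mod n = (l * (q ^ totient n mod n)) mod n" using euler_q by (simp add: mod_mult_right_eq)
  also have "\<dots> = (l * q * q ^ t) mod n" by (simp add: mod_mult_right_eq tt algebra_simps)
  also have "\<dots> = ((l * q) mod n * q ^ t) mod n" by (simp add: mod_mult_left_eq)
  also have "\<dots> = (q ^ j mod n * q ^ t) mod n" using assms(3) j by simp
  also have "\<dots> = q ^ (j + t) mod n" by (simp add: mod_mult_left_eq power_add)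
  finally have "q ^ (j + t) mod n = l" using assms(2) by simp
  then show "l \<in> Orb" unfolding Orb_def using assms(2) by blast
qed

lemma exl: assumes "i < n" shows "\<exists>l<n. (l * q) mod n = i"
proof -
  define t where "t = totient n - 1"
  have tt: "totient n = Suc t" unfolding t_def using tot_pos by simp
  define l where "l = (i * q ^ t) mod n"
  have "(l * q) mod n = (i * q ^ t * q) mod n" unfolding l_def by (simp add: mod_mult_left_eq)
  also have "\<dots> = (i * (q ^ totient n)) mod n" by (simp add: tt algebra_simps)
  also have "\<dots> = (i * (q ^ totient n mod n)) mod n" by (simp add: mod_mult_right_eq)
  also have "\<dots> = i" using euler_q assms by (simp add: mod_mult_right_eq)
  finally show ?thesis using n_pos unfolding l_def by (intro exI[of _ "(i * q ^ t) mod n"]) simp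
qed

lemma cn_sO_pcomp: "cn (pcompose sO (monom 1 q)) sO"
  unfolding cn_red
proof (rule red_ext)
  fix i assume i: "i < n"
  obtain l where l: "l < n" "(l * q) mod n = i" using exl[OF i] by blast
  have "red (pcompose sO (monom 1 q)) i = red sO l" by (rule red_pcomp[OF i l(1) l(2) cop_qn])
  also have "\<dots> = red sO i" unfolding red_sO using Oq[OF i l(1) l(2)] by simp
  finally show "red (pcompose sO (monom 1 q)) i = red sO i" .
qed

lemma frob1: "eqJ (F ^ q) (pcompose F (monom 1 q))"
  using frob_poly_q[of F 1] eqJ_MX by simp

lemma sO_frob: "eqJ (sO ^ q) sO"
  using frob1[of sO] eqJ_cn[OF cn_sO_pcomp] eqJ_trans by blast

lemma u_frob: "eqJ ((sO - [:c:]) ^ q) (sO - [:c:])"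
proof -
  have "pcompose (sO - [:c:]) (monom 1 q) = pcompose sO (monom 1 q) - [:c:]" by (simp add: pcompose_diff)
  then have "eqJ (pcompose (sO - [:c:]) (monom 1 q)) (sO - [:c:])"
    using eqJ_diff[OF eqJ_cn[OF cn_sO_pcomp] eqJ_refl] by simp
  then show ?thesis using frob1 eqJ_trans by blast
qed

lemma idem_Ec: "eqJ ((1 - (sO - [:c:]) ^ (q - 1)) * (1 - (sO - [:c:]) ^ (q - 1))) (1 - (sO - [:c:]) ^ (q - 1))"
proof -
  define u where "u = sO - [:c:]"
  have q2: "q \<ge> 2" by (rule q_ge2)
  have "(1 - u ^ (q - 1)) * (1 - u ^ (q - 1)) - (1 - u ^ (q - 1)) = u ^ (q - 2) * (u ^ q - u)"
  proof -
    have "(q - 1) + (q - 1) = (q - 2) + q" using q2 by simp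
    then have a: "u ^ (q - 1) * u ^ (q - 1) = u ^ (q - 2) * u ^ q" by (metis power_add)
    have b: "u ^ (q - 1) = u ^ (q - 2) * u" using q2 by (simp add: power_Suc2[symmetric] Suc_diff_Suc numeral_2_eq_2)
    define A where "A = u ^ (q - 1)"
    define B where "B = u ^ (q - 2)"
    define C where "C = u ^ q"
    have a': "A * A = B * C" using a unfolding A_def B_def C_def .
    have b': "A = B * u" using b unfolding A_def B_def .
    have "(1 - A) * (1 - A) - (1 - A) = A * A - A" by (simp add: algebra_simps)
    also have "\<dots> = B * (C - u)" by (simp only: a', simp only: b', simp add: algebra_simps)
    finally show ?thesis unfolding A_def B_def C_def .
  qed
  moreover have "inJ (u ^ q - u)" using u_frob unfolding eqJ_def u_def .
  ultimately show ?thesis unfolding eqJ_def u_def[symmetric] using inJ_mult2 by metis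
qed

end


context chainq begin

lemma RC: "finite T \<Longrightarrow> T \<subseteq> S \<Longrightarrow> (\<forall>i\<ge>card T. coeff D i = 0) \<Longrightarrow> (\<forall>c\<in>T. poly D c \<in> M)
  \<Longrightarrow> \<forall>i. coeff D i \<in> M"
proof (induct T arbitrary: D rule: finite_induct)
  case empty then show ?case by simp
next
  case (insert c T)
  define H where "H = synthetic_div D c"
  have De: "D = [:-c, 1:] * H + [:poly D c:]" unfolding H_def by (rule synthetic_div_correct'[symmetric])
  have cT: "card (insert c T) = Suc (card T)" using insert by simp
  have dD: "degree D \<le> card T" using insert(5) cT by (intro degree_le) auto
  have cH: "\<forall>i\<ge>card T. coeff H i = 0"
  proof (cases "degree D = 0")
    case True then have "H = 0" unfolding H_def using synthetic_div_eq_0_iff by blast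
    then show ?thesis by simp
  next
    case False
    then have "degree H < card T" unfolding H_def degree_synthetic_div using dD by simp
    then show ?thesis by (intro allI impI coeff_eq_0) simp
  qed
  have pD: "poly D c \<in> M" using insert(6) by simp
  have pH: "\<forall>c'\<in>T. poly H c' \<in> M"
  proof
    fix c' assume c': "c' \<in> T"
    have "poly D c' = (c' - c) * poly H c' + poly D c" by (subst De) (simp add: algebra_simps)
    moreover have "poly D c' \<in> M" using insert(6) c' by simp
    ultimately have "(c' - c) * poly H c' \<in> M" using pD M_diff by (metis add_diff_cancel_right')
    moreover have "c' - c \<notin> M"
    proof
      assume "c' - c \<in> M"
      then have "c' = c" using S_inj insert(4) c' by blast
      then show False using c' insert(2) by simp
    qed
    ultimately show "poly H c' \<in> M" using mult_notin_M by blast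
  qed
  have IH: "\<forall>i. coeff H i \<in> M" using insert(3)[of H] insert(4) cH pH by blast
  show ?case
  proof
    fix i
    have "coeff D i = - c * coeff H i + coeff (pCons 0 H) i + coeff [:poly D c:] i"
      by (subst De) simp
    moreover have "coeff (pCons 0 H) i \<in> M" using IH by (cases i) auto
    moreover have "coeff [:poly D c:] i \<in> M" using pD by (cases i) auto
    moreover have "- c * coeff H i \<in> M" using IH M_mult by blast
    ultimately show "coeff D i \<in> M" using M_add by metis
  qed
qed

lemma prod_lin: "finite T \<Longrightarrow> coeff (\<Prod>c\<in>T. [:-c, 1:]) (card T) = 1 \<and> (\<forall>i>card T. coeff (\<Prod>c\<in>T. [:-c, 1:]) i = 0)"
proof (induct T rule: finite_induct)
  case empty then show ?case by (auto simp: coeff_1)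
next
  case (insert c T)
  define P where "P = (\<Prod>c\<in>T. [:-c, 1:])"
  have "(\<Prod>c\<in>insert c T. [:-c, 1:]) = [:-c, 1:] * P" unfolding P_def using insert by simp
  also have "\<dots> = smult (-c) P + pCons 0 P" by simp
  finally have e: "(\<Prod>c\<in>insert c T. [:-c, 1:]) = smult (-c) P + pCons 0 P" .
  show ?case unfolding e using insert(1,2) insert(3)[folded P_def] by (auto simp: coeff_pCons split: nat.split)
qed

lemma Dp_coeffs: "\<forall>i. coeff ((\<Prod>c\<in>S. [:-c, 1:]) - (monom 1 q - monom 1 1)) i \<in> M"
proof (rule RC[OF finS subset_refl])
  have q2: "q \<ge> 2" by (rule q_ge2)
  show "\<forall>i\<ge>card S. coeff ((\<Prod>c\<in>S. [:-c, 1:]) - (monom 1 q - monom 1 1)) i = 0"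
    using prod_lin[OF finS] q2 unfolding card_S by (auto simp: le_less)
  show "\<forall>c\<in>S. poly ((\<Prod>c\<in>S. [:-c, 1:]) - (monom 1 q - monom 1 1)) c \<in> M"
  proof
    fix c assume c: "c \<in> S"
    have "poly (\<Prod>c\<in>S. [:-c, 1:]) c = 0" unfolding poly_prod using c finS
      by (intro prod_zero) auto
    moreover have "poly (monom 1 q - monom 1 1) c = c ^ q - c" by (simp add: poly_monom)
    ultimately have "poly ((\<Prod>c\<in>S. [:-c, 1:]) - (monom 1 q - monom 1 1)) c = - (c ^ q - c)" by simp
    then show "poly ((\<Prod>c\<in>S. [:-c, 1:]) - (monom 1 q - monom 1 1)) c \<in> M"
      using M_uminus[OF Frob_a[of c]] by simp
  qed
qed

end

context setting begin

lemma MX_pcompose: "\<forall>i. coeff D i \<in> M \<Longrightarrow> MX (pcompose D s)"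
proof (induct D)
  case 0 then show ?case by (simp add: MX_0)
next
  case (pCons a D)
  have aM: "a \<in> M" using pCons(3) coeff_pCons_0[of a D] by metis
  have "MX [:a:]" unfolding MX_def using aM by (simp add: coeff_pCons split: nat.split)
  moreover have "\<forall>i. coeff D i \<in> M" using pCons(3) coeff_pCons_Suc[of a D] by metis
  then have "MX (pcompose D s)" using pCons(2) by blast
  ultimately show ?case by (simp add: pcompose_pCons MX_add MX_mult)
qed

lemma pcompose_X_pow: "pcompose (monom 1 k) Q = Q ^ (k::nat)" for Q :: "'a poly"
proof -
  have X: "pcompose ([:0, 1:] :: 'a poly) Q = Q" by (simp add: pcompose_pCons)
  have "pcompose ([:0, 1:] ^ k) Q = Q ^ k"
  proof (induct k)
    case 0 then show ?case by (simp add: pcompose_1)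
  next
    case (Suc k) then show ?case by (metis power_Suc pcompose_mult X)
  qed
  then show ?thesis by (simp add: monom_altdef)
qed

lemma prod_sO: "eqJ (\<Prod>c\<in>S. sO - [:c:]) 0"
proof -
  have "MX (pcompose ((\<Prod>c\<in>S. [:-c, 1:]) - (monom 1 q - monom 1 1)) sO)"
    by (rule MX_pcompose[OF Dp_coeffs])
  moreover have "pcompose ((\<Prod>c\<in>S. [:-c, 1:]) - (monom 1 q - monom 1 1)) sO = (\<Prod>c\<in>S. sO - [:c:]) - (sO ^ q - sO)"
  proof -
    have lin: "pcompose [:-c, 1:] sO = sO - [:c:]" for c by (simp add: pcompose_pCons)
    show ?thesis by (simp only: pcompose_diff pcompose_prod lin pcompose_X_pow power_one_right)
  qed
  ultimately have "eqJ (\<Prod>c\<in>S. sO - [:c:]) (sO ^ q - sO)" unfolding eqJ_def by (simp add: MX_inJ)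
  moreover have "eqJ (sO ^ q - sO) 0" using sO_frob unfolding eqJ_def by simp
  ultimately show ?thesis using eqJ_trans by blast
qed

end


context setting begin

lemma exists_b: assumes noneg: "\<forall>j. q ^ j mod n \<noteq> n - 1" and n1: "n > 1"
  shows "\<exists>b. inJ (b * star b) \<and> \<not> inJ b"
proof (rule ccontr)
  assume "\<not> ?thesis"
  then have H: "\<And>b. inJ (b * star b) \<Longrightarrow> inJ b" by blast
  define D where "D = sO - star sO"
  have q2: "q \<ge> 2" by (rule q_ge2)
  have C1: "eqJ D (D * (sO - [:c:]) ^ (q - 1))" for c
  proof -
    define u where "u = sO - [:c:]"
    define E where "E = 1 - u ^ (q - 1)"
    have fixE: "eqJ E (star E)" unfolding E_def u_def by (rule idem_fixed2[OF H idem_Ec])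
    have "u * E = u - u ^ q" unfolding E_def using q2
      by (simp add: algebra_simps power_Suc[symmetric] del: power_Suc)
    moreover have "eqJ (u - u ^ q) 0" unfolding eqJ_0 using eqJ_sym[OF u_frob[of c]] unfolding eqJ_def u_def .
    ultimately have uE: "eqJ (u * E) 0" by simp
    then have 1: "eqJ (sO * E) ([:c:] * E)" unfolding eqJ_def u_def by (simp add: algebra_simps)
    have "eqJ (star (u * E)) 0" using eqJ_star[OF uE] by (simp add: star_def)
    then have "eqJ ((star sO - [:c:]) * star E) 0" unfolding u_def star_mult star_diff star_const .
    then have "eqJ ((star sO - [:c:]) * E) 0"
      using eqJ_trans[OF eqJ_mult[OF eqJ_refl fixE, of "star sO - [:c:]"]] by blast
    then have 2: "eqJ (star sO * E) ([:c:] * E)" unfolding eqJ_def by (simp add: algebra_simps)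
    have "eqJ (D * E) 0" unfolding D_def using eqJ_diff[OF 1 2] by (simp add: algebra_simps)
    moreover have "D * E = D - D * u ^ (q - 1)" unfolding E_def by (simp add: algebra_simps)
    ultimately show ?thesis unfolding eqJ_def u_def by simp
  qed
  have C2: "T \<subseteq> S \<Longrightarrow> eqJ D (D * (\<Prod>c\<in>T. (sO - [:c:]) ^ (q - 1)))" for T
  proof -
    assume "T \<subseteq> S"
    then have "finite T" using finS finite_subset by blast
    then show ?thesis
    proof (induct T rule: finite_induct)
      case empty then show ?case by (simp add: eqJ_refl)
    next
      case (insert c T)
      have "eqJ (D * (sO - [:c:]) ^ (q - 1)) (D * (\<Prod>c\<in>T. (sO - [:c:]) ^ (q - 1)) * (sO - [:c:]) ^ (q - 1))"
        by (rule eqJ_mult[OF insert(3) eqJ_refl])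
      then have "eqJ D (D * (\<Prod>c\<in>T. (sO - [:c:]) ^ (q - 1)) * (sO - [:c:]) ^ (q - 1))"
        using C1[of c] eqJ_trans by blast
      then show ?case using insert(1,2) by (simp add: algebra_simps)
    qed
  qed
  have "eqJ ((\<Prod>c\<in>S. sO - [:c:]) ^ (q - 1)) (0 ^ (q - 1))" by (rule eqJ_power[OF prod_sO])
  moreover have "(0::'a poly) ^ (q - 1) = 0" using q2 by (simp add: zero_power)
  ultimately have "eqJ (\<Prod>c\<in>S. (sO - [:c:]) ^ (q - 1)) 0" by (simp add: prod_power_distrib)
  then have "eqJ (D * (\<Prod>c\<in>S. (sO - [:c:]) ^ (q - 1))) (D * 0)" by (rule eqJ_mult[OF eqJ_refl])
  then have "eqJ D 0" using C2[of S] eqJ_trans by simp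
  then have "red D (n - 1) \<in> M" unfolding eqJ_def inJ_def by simp
  moreover have "red sO (n - 1) = 0"
  proof -
    have "n - 1 \<notin> Orb" unfolding Orb_def using noneg by auto
    then show ?thesis unfolding red_sO by simp
  qed
  moreover have "red (star sO) (n - 1) = 1"
  proof -
    have "red (star sO) (n - 1) = red sO 1" unfolding star_def
    proof (rule red_pcomp)
      show "coprime (n - 1) n" using coprime_diff_one_left_nat[of n] n1 by simp
    qed (use n1 in auto)
    moreover have "1 \<in> Orb" unfolding Orb_def using n1 by (auto intro!: exI[of _ 0])
    ultimately show ?thesis unfolding red_sO by simp
  qed
  ultimately have "- 1 \<in> M" unfolding D_def red_diff by simp
  then show False using one_notin_M M_uminus by fastforce
qed

lemma fin_words: "finite (words n :: (nat \<Rightarrow> 'a) set)"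
proof -
  have "words n = {f :: nat \<Rightarrow> 'a. \<forall>x. (x \<in> {..<n} \<longrightarrow> f x \<in> UNIV) \<and> (x \<notin> {..<n} \<longrightarrow> f x = 0)}"
    unfolding words_def by auto
  then show ?thesis using finite_set_of_finite_funs[of "{..<n}" "UNIV :: 'a set" 0] finR by simp
qed

lemma lift: assumes "inJ (b * star b)" "\<not> inJ b"
  shows "\<exists>E. cn (E * E) E \<and> cn (E * star E) 0 \<and> \<not> inJ E"
proof -
  define N where "N = card (words n :: (nat \<Rightarrow> 'a) set)"
  have "\<not> inj_on (\<lambda>k. red (b ^ k)) {1..N + 1}"
  proof
    assume "inj_on (\<lambda>k. red (b ^ k)) {1..N + 1}"
    then have "card ((\<lambda>k. red (b ^ k)) ` {1..N + 1}) = N + 1" by (simp add: card_image)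
    moreover have "(\<lambda>k. red (b ^ k)) ` {1..N + 1} \<subseteq> words n" using red_words by auto
    then have "card ((\<lambda>k. red (b ^ k)) ` {1..N + 1}) \<le> N" unfolding N_def by (rule card_mono[OF fin_words])
    ultimately show False by simp
  qed
  then obtain i j where ij: "i \<in> {1..N + 1}" "j \<in> {1..N + 1}" "i \<noteq> j" "red (b ^ i) = red (b ^ j)"
    unfolding inj_on_def by blast
  obtain i0 t where it: "i0 \<ge> 1" "t \<ge> 1" "cn (b ^ (i0 + t)) (b ^ i0)"
  proof (cases "i < j")
    case True
    have "i \<ge> 1" "j - i \<ge> 1" using ij(1) True by auto
    moreover have "cn (b ^ (i + (j - i))) (b ^ i)" using True ij(4) by (simp add: cn_red)
    ultimately show ?thesis by (rule that)
  next
    case False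
    then have ji: "j < i" using ij by simp
    have "j \<ge> 1" "i - j \<ge> 1" using ij(2) ji by auto
    moreover have "cn (b ^ (j + (i - j))) (b ^ j)" using ji ij(4) by (simp add: cn_red)
    ultimately show ?thesis by (rule that)
  qed
  have per: "cn (b ^ (a + t)) (b ^ a)" if "a \<ge> i0" for a
  proof -
    have "b ^ (a + t) = b ^ (a - i0) * b ^ (i0 + t)" "b ^ a = b ^ (a - i0) * b ^ i0"
      using that by (simp_all add: power_add[symmetric])
    then show ?thesis using cn_mult[OF cn_refl it(3)] by simp
  qed
  have perm: "cn (b ^ (a + t * m)) (b ^ a)" if "a \<ge> i0" for a m
  proof (induct m)
    case 0 then show ?case by (simp add: cn_refl)
  next
    case (Suc m)
    have "cn (b ^ (a + t * m + t)) (b ^ (a + t * m))" using per[of "a + t * m"] that by simp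
    then show ?case using Suc cn_trans by (simp add: algebra_simps)
  qed
  define k where "k = t * i0"
  have k: "k \<ge> i0" "k \<ge> 1" unfolding k_def using it by (simp_all add: mult_le_mono)
  define E where "E = b ^ k"
  have idem: "cn (E * E) E" unfolding E_def using perm[of k i0] k by (simp add: power_add[symmetric] k_def mult_2)
  have nE: "\<not> inJ E" unfolding E_def using reduced assms(2) by blast
  have "E * star E = (b * star b) ^ k" unfolding E_def by (simp add: star_power power_mult_distrib)
  moreover obtain k' where "k = Suc k'" using k(2) by (cases k) auto
  ultimately have J: "inJ (E * star E)" using inJ_mult[OF assms(1)] by simp
  have "cn (star (E * E)) (star E)" by (rule cn_star[OF idem])
  then have idem2: "cn (star E * star E) (star E)" by (simp add: star_mult)
  have "cn ((E * star E) * (E * star E)) (E * star E)"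
    using cn_mult[OF idem idem2] by (simp add: algebra_simps)
  then have "cn (E * star E) 0" by (rule idem_nil[OF J])
  then show ?thesis using idem nE by blast
qed

end


context setting begin

theorem exists_nontrivial:
  assumes noneg: "\<forall>j. q ^ j mod n \<noteq> n - 1" and n1: "n > 1" and ev: "even e"
  shows "\<exists>C. cyclic_code n C \<and> self_dual n C \<and> C \<noteq> trivial_code n g e"
proof -
  obtain b where b: "inJ (b * star b)" "\<not> inJ b" using exists_b[OF noneg n1] by blast
  obtain E where idem: "cn (E * E) E" and orth: "cn (E * star E) 0" and nE: "\<not> inJ E"
    using lift[OF b] by blast
  define h where "h = e div 2"
  have he: "h + h = e" using ev unfolding h_def by (metis dvd_mult_div_cancel mult_2)
  have h1: "h \<ge> 1" using he e_pos by simp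
  define c where "c = g ^ h"
  have cc: "c * c = 0" unfolding c_def using he ge by (metis power_add)
  define Es where "Es = star E"
  define G where "G = 1 - E - Es"
  have f1: "cn (Es * Es) Es" unfolding Es_def using cn_star[OF idem] by (simp add: star_mult)
  have f2: "cn (E * Es) 0" unfolding Es_def by (rule orth)
  have f3: "cn (star Es) E" unfolding Es_def by (rule star_star)
  have f4: "cn (star G) G"
  proof -
    have "star G = 1 - Es - star Es" unfolding G_def Es_def by (simp add: star_diff star_1)
    moreover have "cn (1 - Es - star Es) (1 - Es - E)" by (intro cn_diff cn_refl f3)
    moreover have "1 - Es - E = G" unfolding G_def by simp
    ultimately show ?thesis by simp
  qed
  have f5: "cn (E * G) 0"
  proof -
    have "E * G = E - E * E - E * Es" unfolding G_def by (simp add: algebra_simps)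
    moreover have "cn (E - E * E - E * Es) (E - E - 0)" by (intro cn_diff cn_refl idem f2)
    ultimately show ?thesis by simp
  qed
  have f6: "cn (Es * G) 0"
  proof -
    have "Es * G = Es - E * Es - Es * Es" unfolding G_def by (simp add: algebra_simps)
    moreover have "cn (Es - E * Es - Es * Es) (Es - 0 - Es)" by (intro cn_diff cn_refl f1 f2)
    ultimately show ?thesis by simp
  qed
  have f7: "cn (G * G) G"
  proof -
    have "G * G = G - E * G - Es * G" unfolding G_def by (simp add: algebra_simps)
    moreover have "cn (G - E * G - Es * G) (G - 0 - 0)" by (intro cn_diff cn_refl f5 f6)
    ultimately show ?thesis by simp
  qed
  define cw where "cw f g' = E * f + smult c (G * g')" for f g'
  define C where "C = {red (cw f g') | f g'. True}"
  have Cw: "C \<subseteq> words n" unfolding C_def using red_words by auto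
  have lin: "linear_code n C" unfolding linear_code_def
  proof (intro conjI ballI allI)
    show "C \<subseteq> words n" by (rule Cw)
    have "red (cw 0 0) = (\<lambda>i. 0)" unfolding cw_def by (simp add: red_0)
    then show "(\<lambda>i. 0) \<in> C" unfolding C_def by (metis (mono_tags, lifting) mem_Collect_eq)
  next
    fix u v assume "u \<in> C" "v \<in> C"
    then obtain f1 g1 f2 g2 where "u = red (cw f1 g1)" "v = red (cw f2 g2)" unfolding C_def by blast
    moreover have "cw f1 g1 + cw f2 g2 = cw (f1 + f2) (g1 + g2)" unfolding cw_def by (simp add: algebra_simps smult_add_right)
    ultimately have "(\<lambda>i. u i + v i) = red (cw (f1 + f2) (g1 + g2))" by (simp add: red_add[symmetric])
    then show "(\<lambda>i. u i + v i) \<in> C" unfolding C_def by blast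
  next
    fix r v assume "v \<in> C"
    then obtain f2 g2 where "v = red (cw f2 g2)" unfolding C_def by blast
    moreover have "smult r (cw f2 g2) = cw (smult r f2) (smult r g2)" unfolding cw_def
      by (simp add: smult_add_right mult.left_commute mult.commute)
    ultimately have "(\<lambda>i. r * v i) = red (cw (smult r f2) (smult r g2))" by (simp add: red_smult[symmetric])
    then show "(\<lambda>i. r * v i) \<in> C" unfolding C_def by blast
  qed
  have cyc: "cyclic_code n C" unfolding cyclic_code_def
  proof (intro conjI ballI lin)
    fix v assume "v \<in> C"
    then obtain f2 g2 where "v = red (cw f2 g2)" unfolding C_def by blast
    moreover have "monom 1 1 * cw f2 g2 = cw (monom 1 1 * f2) (monom 1 1 * g2)" unfolding cw_def
      by (simp add: algebra_simps)
    ultimately have "cyc_shift n v = red (cw (monom 1 1 * f2) (monom 1 1 * g2))" by (simp add: red_x[symmetric])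
    then show "cyc_shift n v \<in> C" unfolding C_def by blast
  qed
  have orthAB: "cn (cw f1 g1 * star (cw f2 g2)) 0" for f1 g1 f2 g2
  proof -
    have "star (cw f2 g2) = Es * star f2 + smult c (star G * star g2)"
      unfolding cw_def Es_def by (simp add: star_add star_mult star_smult)
    then have "cw f1 g1 * star (cw f2 g2) = (E * Es) * (f1 * star f2) + smult c ((E * star G) * (f1 * star g2))
       + smult c ((Es * G) * (g1 * star f2)) + smult (c * c) (G * star G * g1 * star g2)"
      unfolding cw_def by (simp add: algebra_simps smult_add_right)
    moreover have "cn ((E * Es) * (f1 * star f2) + smult c ((E * star G) * (f1 * star g2))
       + smult c ((Es * G) * (g1 * star f2)) + smult (c * c) (G * star G * g1 * star g2))
       (0 * (f1 * star f2) + smult c (0 * (f1 * star g2)) + smult c (0 * (g1 * star f2)) + 0)"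
    proof (intro cn_add cn_mult cn_smult cn_refl f2 f6)
      show "cn (E * star G) 0" using cn_mult[OF cn_refl f4, of E] f5 cn_trans by blast
      show "cn (smult (c * c) (G * star G * g1 * star g2)) 0" using cc by (simp add: cn_refl)
    qed
    ultimately show ?thesis by simp
  qed
  have sub1: "C \<subseteq> dual_code n C"
  proof
    fix u assume "u \<in> C"
    then obtain f1 g1 where u: "u = red (cw f1 g1)" unfolding C_def by blast
    have "code_inner n u v = 0" if "v \<in> C" for v
    proof -
      obtain f2 g2 where v: "v = red (cw f2 g2)" using \<open>v \<in> C\<close> unfolding C_def by blast
      have "code_inner n u v = red (wp u * star (wp v)) 0" using inner_wp u v red_words by metis
      moreover have "cn (wp u * star (wp v)) (cw f1 g1 * star (cw f2 g2))"
        unfolding u v by (intro cn_mult cn_star cn_sym[OF cn_wp_red])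
      ultimately have "code_inner n u v = red (cw f1 g1 * star (cw f2 g2)) 0" by (simp add: cn_red)
      then show ?thesis using orthAB[of f1 g1 f2 g2] by (simp add: cn_red red_0)
    qed
    then show "u \<in> dual_code n C" unfolding dual_code_def using u red_words by blast
  qed
  have sub2: "dual_code n C \<subseteq> C"
  proof
    fix u assume uD: "u \<in> dual_code n C"
    then have uw: "u \<in> words n" unfolding dual_code_def by blast
    define U where "U = wp u"
    have "red (cw 1 0) \<in> C" unfolding C_def by blast
    then have "red E \<in> C" unfolding cw_def by simp
    then have "red (U * Es) = (\<lambda>i. 0)" unfolding U_def Es_def by (rule AC[OF cyc uD])
    then have UE: "cn (U * Es) 0" by (simp add: cn_red red_0)
    have "red (cw 0 1) \<in> C" unfolding C_def by blast
    then have "red (smult c G) \<in> C" unfolding cw_def by simp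
    then have "red (U * star (smult c G)) = (\<lambda>i. 0)" unfolding U_def by (rule AC[OF cyc uD])
    then have "cn (U * star (smult c G)) 0" by (simp add: cn_red red_0)
    moreover have "cn (U * star (smult c G)) (smult c (U * G))"
      using cn_smult[OF cn_mult[OF cn_refl f4, of U], of c] by (simp add: star_smult)
    ultimately have "cn (smult c (U * G)) 0" using cn_sym cn_trans by blast
    then have "red (smult c (U * G)) = (\<lambda>i. 0)" by (simp add: cn_red red_0)
    then have "\<forall>l. c * red (U * G) l = 0" unfolding red_smult by metis
    then have "\<forall>l. \<exists>y. red (U * G) l = g ^ h * y"
      using ann[of h] he unfolding c_def by (metis add_diff_cancel_left' le_add2)
    then obtain w' where w': "w' \<in> words n" "red (U * G) = (\<lambda>l. g ^ h * w' l)"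
      using g_pow_div red_words by blast
    have UG: "cn (U * G) (smult c (wp w'))"
      unfolding cn_red red_smult w' c_def using red_wp[OF w'(1)] by simp
    have "U = U * E + U * Es + U * G" unfolding G_def by (simp add: algebra_simps)
    moreover have "cn (U * E + U * Es + U * G) (U * E + 0 + U * G * G)"
      using cn_add[OF cn_add[OF cn_refl UE] cn_sym[OF cn_mult[OF cn_refl f7, of U]]]
      by (simp add: mult.assoc)
    moreover have "cn (U * G * G) (smult c (wp w') * G)" by (rule cn_mult[OF UG cn_refl])
    ultimately have "cn U (cw U (wp w'))" unfolding cw_def
      using cn_trans cn_add[OF cn_refl] by (metis add_0_right mult.commute mult_smult_left)
    then have "u = red (cw U (wp w'))" using red_wp[OF uw] cn_red unfolding U_def by metis
    then show "u \<in> C" unfolding C_def by blast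
  qed
  have sd: "self_dual n C" unfolding self_dual_def using lin sub1 sub2 by blast
  have nt: "C \<noteq> trivial_code n g e"
  proof
    assume "C = trivial_code n g e"
    moreover have "red (cw 1 0) \<in> C" unfolding C_def by blast
    ultimately have "red E \<in> trivial_code n g e" unfolding cw_def by simp
    then obtain x where x: "red E = (\<lambda>i. g ^ h * x i)" unfolding trivial_code_def h_def by blast
    have "red E i \<in> M" for i
    proof -
      have "g ^ h * x i = g * (g ^ (h - 1) * x i)" using h1
        by (metis (no_types, lifting) mult.assoc power_eq_if not_one_le_zero)
      then show ?thesis unfolding x inM by blast
    qed
    then have "inJ E" unfolding inJ_def by blast
    then show False using nE by blast
  qed
  show ?thesis using cyc sd nt by blast
qed

end


lemma NT_a:
  fixes n q j :: nat
  assumes "odd n" "n > 1" "coprime n q" "q ^ j mod n = n - 1"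
  shows "even (ord n q)"
proof (rule ccontr)
  assume od: "odd (ord n q)"
  have "(q ^ j * q ^ j) mod n = ((q ^ j mod n) * (q ^ j mod n)) mod n" by (simp add: mod_mult_eq)
  also have "\<dots> = ((n - 1) * (n - 1)) mod n" using assms(4) by simp
  also have "\<dots> = 1 mod n"
  proof -
    obtain m where m: "n = Suc m" using assms(2) by (cases n) auto
    have "m * m + 2 * m + 1 = n * n" unfolding m by (simp add: algebra_simps)
    then have "(n - 1) * (n - 1) = 1 + n * (m - 1)" unfolding m using assms(2) m
      by (cases m) (auto simp: algebra_simps)
    then show ?thesis by (metis mod_mult_self2 mult.commute)
  qed
  finally have "[q ^ (2 * j) = 1] (mod n)" unfolding cong_def by (simp add: power_add[symmetric] mult_2)
  then have "ord n q dvd 2 * j" using ord_divides' by simp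
  moreover have "coprime (ord n q) 2" using od by simp
  ultimately have "ord n q dvd j" using coprime_dvd_mult_right_iff by blast
  then have "[q ^ j = 1] (mod n)" using ord_divides' by simp
  then have "n - 1 = 1 mod n" using assms(4) unfolding cong_def by simp
  then have "n = 2" using assms(2) by simp
  then show False using assms(1) by simp
qed

lemma NT_b:
  fixes n q l k :: nat
  assumes "odd n" "n > 1" "coprime n q" "prime l" "n = l ^ k" "even (ord n q)"
  shows "\<exists>j. q ^ j mod n = n - 1"
proof -
  define d where "d = ord n q"
  have d0: "d > 0" unfolding d_def using assms(3) ord_eq_0[of n q] by simp
  define j where "j = d div 2"
  have jd: "j + j = d" unfolding j_def d_def using assms(6) by (metis dvd_mult_div_cancel mult_2)
  have j0: "0 < j" "j < d" using jd d0 by auto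
  define x where "x = q ^ j mod n"
  have xn: "x < n" unfolding x_def using assms(2) by simp
  have "(x * x) mod n = (q ^ j * q ^ j) mod n" unfolding x_def by (simp add: mod_mult_eq)
  also have "\<dots> = q ^ d mod n" using jd by (simp add: power_add[symmetric])
  also have "\<dots> = 1 mod n" using ord[of q n] unfolding d_def cong_def by simp
  finally have xx: "[x * x = 1] (mod n)" unfolding cong_def .
  have x1: "x \<ge> 1"
  proof (rule ccontr)
    assume "\<not> x \<ge> 1" then have "x = 0" by simp
    then show False using xx assms(2) unfolding cong_def by simp
  qed
  have "n dvd x * x - 1" using xx x1 by (simp add: cong_altdef_nat)
  moreover have "x * x - 1 = (x - 1) * (x + 1)" using x1 by (cases x) (auto simp: algebra_simps)
  ultimately have dv: "l ^ k dvd (x - 1) * (x + 1)" using assms(5) by simp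
  have l2: "l \<noteq> 2" using assms(1,5) assms(2) by (cases k) auto
  show ?thesis
  proof (cases "l dvd x - 1")
    case True
    have "\<not> l dvd x + 1"
    proof
      assume "l dvd x + 1"
      then have "l dvd (x + 1) - (x - 1)" using True by (rule dvd_diff_nat)
      moreover have "(x + 1) - (x - 1) = 2" using x1 by simp
      ultimately have "l dvd 2" by simp
      then have "l \<le> 2" by (rule dvd_imp_le) simp
      moreover have "l \<ge> 2" using assms(4) by (rule prime_ge_2_nat)
      ultimately show False using l2 by simp
    qed
    then have "coprime (l ^ k) (x + 1)" using assms(4) by (simp add: prime_imp_coprime coprime_commute)
    then have "l ^ k dvd x - 1" using dv coprime_dvd_mult_left_iff by blast
    then have "x - 1 = 0" using xn assms(5) by (metis dvd_imp_le less_imp_diff_less not_gr0 not_less)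
    then have "x = 1" using x1 by simp
    then have "[q ^ j = 1] (mod n)" unfolding x_def cong_def using assms(2) by simp
    then show ?thesis using ord_minimal[OF j0(1)] j0(2) unfolding d_def by blast
  next
    case False
    then have "coprime (l ^ k) (x - 1)" using assms(4) by (simp add: prime_imp_coprime coprime_commute)
    then have "l ^ k dvd x + 1" using dv coprime_dvd_mult_right_iff by blast
    then have "n dvd x + 1" using assms(5) by simp
    moreover have "x + 1 \<le> n" using xn by simp
    ultimately have "x + 1 = n" by (metis dvd_imp_le add_gr_0 zero_less_one le_antisym)
    then have "q ^ j mod n = n - 1" unfolding x_def by simp
    then show ?thesis by blast
  qed
qed


theorem mainTheorem8:
  fixes \<gamma> :: "'a::comm_ring_1"
    and e n p r :: nat
  assumes "finite_chain_ring TYPE('a)"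
    and "is_maximal_ideal (principal_ideal \<gamma>)"
    and "nilpotency_index \<gamma> e"
    and "even e"
    and "prime p"
    and "card (quotient_ring (principal_ideal \<gamma>)) = p ^ r"
    and "odd n"
    and "n > 0"
    and "\<exists>q k. prime q \<and> k > 0 \<and> n = q ^ k"
    and "coprime n p"
  shows "(\<exists>C. cyclic_code n C \<and> self_dual n C \<and> C \<noteq> trivial_code n \<gamma> e)
         \<longleftrightarrow> odd (ord n (p ^ r))"
proof -
  have finR: "finite (UNIV :: 'a set)" using assms(1) unfolding finite_chain_ring_def by blast
  interpret S: setting \<gamma> e "p ^ r" n p r
    by unfold_locales (use assms finR in auto)
  obtain l k where lk: "prime l" "k > 0" "n = l ^ k" using assms(9) by blast
  have n1: "n > 1" using lk by (metis one_less_power prime_gt_1_nat)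
  have cop: "coprime n (p ^ r)" using assms(10) by simp
  show ?thesis
  proof
    assume "\<exists>C. cyclic_code n C \<and> self_dual n C \<and> C \<noteq> trivial_code n \<gamma> e"
    then obtain C where C: "cyclic_code n C" "self_dual n C" "C \<noteq> trivial_code n \<gamma> e" by blast
    show "odd (ord n (p ^ r))"
    proof
      assume "even (ord n (p ^ r))"
      then obtain j where "(p ^ r) ^ j mod n = n - 1" using NT_b[OF assms(7) n1 cop lk(1) lk(3)] by blast
      then have "C = trivial_code n \<gamma> e" using S.only_trivial[OF _ assms(4) C(2) C(1)] by blast
      then show False using C(3) by blast
    qed
  next
    assume od: "odd (ord n (p ^ r))"
    have "\<forall>j. (p ^ r) ^ j mod n \<noteq> n - 1" using NT_a[OF assms(7) n1 cop] od by blast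
    then show "\<exists>C. cyclic_code n C \<and> self_dual n C \<and> C \<noteq> trivial_code n \<gamma> e"
      by (rule S.exists_nontrivial[OF _ n1 assms(4)])
  qed
qed


end
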